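(* For every integer $n\ge0$, every $i\in\{0,2\}$ and every $m\in\{0,1,2,3,4\}$, the number of partitions $\pi$ of $5n+4$ with $\mathrm{srank}(\pi)\equiv i\pmod 4$ and $\text{2-quotient-rank}(\pi)\equiv m\pmod 5$ equals $\tfrac15 p_i(5n+4)$.
   Context: For a partition $\pi$, $\pi'$ is its conjugate, $\mathcal O(\pi)$ the number of odd parts, $\mathrm{srank}(\pi)=\mathcal O(\pi)-\mathcal O(\pi')$, and $p_i(n)$ ($i=0,2$) the number of partitions of $n$ with $\mathrm{srank}\equiv i\pmod 4$. $\nu(\pi)$ denotes the number of (positive) parts of $\pi$. $t$-quotient (here $t=2$): for $\pi=(\lambda_1\ge\lambda_2\ge\cdots)$ with $\lambda_j=0$ for $j$ large, let $S=\{\lambda_j-j: j\ge1\}\subset\mathbb Z$, and for $0\le c\le t-1$ let $S_c=\{k\in\mathbb Z: tk+c\in S\}$. Then $\hat\pi_c$ is the partition whose parts are the numbers $\#\{s\in S_c: s>g\}$ as $g$ ranges over the integers not in $S_c$ (only finitely many are positive). The 2-quotient of $\pi$ is $(\hat\pi_0,\hat\pi_1)$ (for $t=2$), and $\text{2-quotient-rank}(\pi)=\nu(\hat\pi_0)-\nu(\hat\pi_1)$. *)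

theory Defs
  imports Complex_Main
begin

definition partitions :: "nat \<Rightarrow> nat list set" where
  "partitions n = {xs. sorted_wrt (\<ge>) xs \<and> 0 \<notin> set xs \<and> sum_list xs = n}"

text \<open>Conjugate: the j-th part (j = 1..lambda_1) is the number of parts \<ge> j.\<close>
definition conjugate :: "nat list \<Rightarrow> nat list" where
  "conjugate xs = map (\<lambda>j. length (filter (\<lambda>x. x > j) xs))
                      [0..<(if xs = [] then 0 else hd xs)]"

definition num_odd :: "nat list \<Rightarrow> nat" where
  "num_odd xs = length (filter odd xs)"

definition srank :: "nat list \<Rightarrow> int" where
  "srank xs = int (num_odd xs) - int (num_odd (conjugate xs))"

definition p_srank :: "int \<Rightarrow> nat \<Rightarrow> nat" where
  "p_srank i n = card {xs \<in> partitions n. srank xs mod 4 = i}"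

definition part_at :: "nat list \<Rightarrow> nat \<Rightarrow> nat" where
  "part_at xs j = (if 1 \<le> j \<and> j \<le> length xs then xs ! (j - 1) else 0)"

definition beta_set :: "nat list \<Rightarrow> int set" where
  "beta_set xs = {int (part_at xs j) - int j | j. j \<ge> 1}"

definition beta_sub :: "nat \<Rightarrow> nat \<Rightarrow> nat list \<Rightarrow> int set" where
  "beta_sub t c xs = {k. int t * k + int c \<in> beta_set xs}"

text \<open>The parts of the c-th t-quotient partition are the numbers
  card {s \<in> S_c. s > g} for g \<notin> S_c (taking the positive ones); hence its
  number of (positive) parts is the number of such g giving a positive value.\<close>
definition quotient_nu :: "nat \<Rightarrow> nat \<Rightarrow> nat list \<Rightarrow> nat" where
  "quotient_nu t c xs =
     card {g. g \<notin> beta_sub t c xs \<and> card {s \<in> beta_sub t c xs. s > g} > 0}"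

definition two_quotient_rank :: "nat list \<Rightarrow> int" where
  "two_quotient_rank xs = int (quotient_nu 2 0 xs) - int (quotient_nu 2 1 xs)"

end

theory Submission
  imports Defs "HOL-Computational_Algebra.Formal_Power_Series"
begin
unbundle fps_syntax

definition tri :: "nat \<Rightarrow> nat" where "tri m = m * (m - 1) div 2"

lemma tri_0[simp]: "tri 0 = 0" by (simp add: tri_def)
lemma tri_Suc: "tri (Suc m) = tri m + m"
  unfolding tri_def by (induction m) (auto simp: algebra_simps)

lemma card_le_Max_Suc:
  fixes B :: "nat set"
  assumes "finite B" "B \<noteq> {}"
  shows "card B \<le> Suc (Max B)"
proof -
  have "B \<subseteq> {0..Max B}" using assms by auto
  then have "card B \<le> card {0..Max B}" by (intro card_mono) auto
  then show ?thesis by simp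
qed

lemma sum_ge_tri:
  fixes B :: "nat set"
  assumes "finite B"
  shows "tri (card B) \<le> \<Sum>B"
  using assms
proof (induction "card B" arbitrary: B)
  case 0 then show ?case by simp
next
  case (Suc m)
  then have ne: "B \<noteq> {}" by auto
  define B' where "B' = B - {Max B}"
  have mx: "Max B \<in> B" using Suc.prems ne by simp
  have cB': "card B' = m" using Suc.hyps(2) mx Suc.prems by (simp add: B'_def)
  have IH: "tri m \<le> \<Sum>B'" using Suc.hyps(1)[of B'] cB' Suc.prems by (simp add: B'_def)
  have "\<Sum>B = Max B + \<Sum>B'" using Suc.prems mx unfolding B'_def by (simp add: sum.remove)
  moreover have "m \<le> Max B" using card_le_Max_Suc[OF Suc.prems ne] Suc.hyps(2) by simp
  ultimately show ?case using IH by (simp add: tri_Suc flip: Suc.hyps(2))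
qed

definition sets_of :: "nat \<Rightarrow> nat \<Rightarrow> nat set set" where
  "sets_of m r = {B. finite B \<and> card B = m \<and> \<Sum>B = r + tri m}"

lemma Max_bound:
  fixes B :: "nat set"
  assumes "B \<in> sets_of m r" "B \<noteq> {}"
  shows "Max B \<le> r + m"
proof -
  have f: "finite B" and c: "card B = m" and s: "\<Sum>B = r + tri m" using assms by (auto simp: sets_of_def)
  define B' where "B' = B - {Max B}"
  have mx: "Max B \<in> B" using f assms(2) by simp
  have cB': "card B' = m - 1" using c mx f by (simp add: B'_def)
  have "tri (m - 1) \<le> \<Sum>B'" using sum_ge_tri[of B'] cB' f by (simp add: B'_def)
  moreover have "\<Sum>B = Max B + \<Sum>B'" using f mx unfolding B'_def by (simp add: sum.remove)
  moreover have "m \<ge> 1" using c f assms(2) by (cases m) auto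
  moreover have "tri m = tri (m - 1) + (m - 1)" using tri_Suc[of "m-1"] \<open>m \<ge> 1\<close> by simp
  ultimately show ?thesis using s by linarith
qed

lemma sets_of_subset: "sets_of m r \<subseteq> Pow {0..r + m}"
proof
  fix B assume B: "B \<in> sets_of m r"
  show "B \<in> Pow {0..r+m}"
  proof (cases "B = {}")
    case False
    have "finite B" using B by (simp add: sets_of_def)
    then have "\<forall>b\<in>B. b \<le> Max B" by simp
    then show ?thesis using Max_bound[OF B False] by auto
  qed simp
qed

lemma finite_sets_of[simp]: "finite (sets_of m r)"
  by (rule finite_subset[OF sets_of_subset]) simp

definition gbm :: "nat set \<Rightarrow> nat" where
  "gbm B = (if B = {} then 0 else Max B + 1 - card B)"

definition Phi :: "nat \<Rightarrow> complex \<Rightarrow> complex fps" where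
  "Phi m z = Abs_fps (\<lambda>r. \<Sum>B\<in>sets_of m r. z ^ gbm B)"

definition Geo :: "nat \<Rightarrow> complex \<Rightarrow> complex fps" where
  "Geo k z = Abs_fps (\<lambda>n. if k dvd n then z ^ (n div k) else 0)"

lemma Geo_inv:
  assumes "k \<ge> 1"
  shows "(1 - fps_const z * fps_X ^ k) * Geo k z = 1"
proof (rule fps_ext)
  fix n
  have e: "(fps_const z * fps_X ^ k * Geo k z) $ n = (if n < k then 0 else z * Geo k z $ (n - k))"
    by (simp add: fps_X_power_mult_nth mult.assoc)
  show "((1 - fps_const z * fps_X ^ k) * Geo k z) $ n = (1::complex fps) $ n"
  proof (cases "n < k")
    case True
    then show ?thesis using e assms
      by (auto simp: algebra_simps Geo_def dest: dvd_imp_le)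
  next
    case False
    then have "k dvd n \<longleftrightarrow> k dvd (n - k)" by (simp add: dvd_minus_self)
    moreover have "k dvd n \<Longrightarrow> n div k = Suc ((n - k) div k)"
    proof -
      assume "k dvd n"
      then obtain t where "n = k * t" by auto
      moreover have "t \<ge> 1" using False assms \<open>n = k * t\<close> by (cases t) auto
      ultimately show ?thesis using assms
        by (simp add: diff_mult_distrib2[of k t 1, simplified, symmetric])
    qed
    ultimately show ?thesis using e False assms
      by (auto simp: algebra_simps Geo_def)
  qed
qed

lemma sum_Suc_image: "finite B \<Longrightarrow> \<Sum>(Suc ` B) = \<Sum>B + card B"
proof -
  assume f: "finite B"
  have "\<Sum>(Suc ` B) = (\<Sum>b\<in>B. Suc b)" by (simp add: sum.reindex)
  also have "\<dots> = \<Sum>B + card B" using f by (induction rule: finite_induct) auto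
  finally show ?thesis .
qed

lemma Max_Suc_image: "finite B \<Longrightarrow> B \<noteq> {} \<Longrightarrow> Max (Suc ` B) = Suc (Max B)"
  by (simp add: mono_Max_commute[symmetric] mono_def)

lemma gbm_Suc_image: "finite B \<Longrightarrow> B \<noteq> {} \<Longrightarrow> gbm (Suc ` B) = Suc (gbm B)"
proof -
  assume f: "finite B" and ne: "B \<noteq> {}"
  have "card B \<le> Suc (Max B)" using card_le_Max_Suc[OF f ne] .
  then show ?thesis using f ne by (simp add: gbm_def Max_Suc_image card_image)
qed

lemma gbm_ins0: "finite B \<Longrightarrow> gbm (insert 0 (Suc ` B)) = gbm B"
proof (cases "B = {}")
  case True then show ?thesis by (simp add: gbm_def)
next
  case False
  assume f: "finite B"
  have "card B \<le> Suc (Max B)" using card_le_Max_Suc[OF f False] .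
  moreover have "Max (insert 0 (Suc ` B)) = Suc (Max B)"
    using f False by (simp add: Max_Suc_image)
  moreover have "card (insert 0 (Suc ` B)) = Suc (card B)" using f by (simp add: card_image)
  ultimately show ?thesis using False by (simp add: gbm_def)
qed

lemma Suc_image_pre: "0 \<notin> B \<Longrightarrow> Suc ` ((\<lambda>b. b - 1) ` B) = B"
proof -
  assume a: "0 \<notin> B"
  have "Suc ` ((\<lambda>b. b - 1) ` B) = (\<lambda>b. Suc (b - 1)) ` B" by (simp add: image_image)
  also have "\<dots> = (\<lambda>b. b) ` B"
  proof (intro image_cong refl)
    fix x assume "x \<in> B" then have "x \<noteq> 0" using a by (metis)
    then show "Suc (x - 1) = x" by simp
  qed
  finally show ?thesis by simp
qed

lemma sets_of_with0:
  "{B \<in> sets_of (Suc m) n. 0 \<in> B} = (\<lambda>B'. insert 0 (Suc ` B')) ` sets_of m n"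
proof
  show "(\<lambda>B'. insert 0 (Suc ` B')) ` sets_of m n \<subseteq> {B \<in> sets_of (Suc m) n. 0 \<in> B}"
  proof
    fix B assume "B \<in> (\<lambda>B'. insert 0 (Suc ` B')) ` sets_of m n"
    then obtain B' where B: "B = insert 0 (Suc ` B')" and B': "B' \<in> sets_of m n" by auto
    have f: "finite B'" and c: "card B' = m" and s: "\<Sum>B' = n + tri m" using B' by (auto simp: sets_of_def)
    show "B \<in> {B \<in> sets_of (Suc m) n. 0 \<in> B}"
      using f c s by (simp add: B sets_of_def card_image sum_Suc_image tri_Suc)
  qed
next
  show "{B \<in> sets_of (Suc m) n. 0 \<in> B} \<subseteq> (\<lambda>B'. insert 0 (Suc ` B')) ` sets_of m n"
  proof
    fix B assume B: "B \<in> {B \<in> sets_of (Suc m) n. 0 \<in> B}"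
    have f: "finite B" and c: "card B = Suc m" and s: "\<Sum>B = n + tri (Suc m)" and z: "0 \<in> B"
      using B by (auto simp: sets_of_def)
    define B' where "B' = (\<lambda>b. b - 1) ` (B - {0})"
    have e: "Suc ` B' = B - {0}" unfolding B'_def by (rule Suc_image_pre) simp
    have eB: "B = insert 0 (Suc ` B')" using e z by auto
    have fB': "finite B'" using f by (simp add: B'_def)
    have cB': "card B' = m" using c z f e by (metis card_Diff_singleton card_image diff_Suc_1 inj_Suc inj_on_subset subset_UNIV)
    have "\<Sum>B = \<Sum>(Suc ` B')" using eB fB' by simp
    then have "\<Sum>B' = n + tri m" using s cB' fB' by (simp add: sum_Suc_image tri_Suc)
    then have "B' \<in> sets_of m n" using fB' cB' by (simp add: sets_of_def)
    then show "B \<in> (\<lambda>B'. insert 0 (Suc ` B')) ` sets_of m n" using eB by blast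
  qed
qed

lemma sets_of_without0:
  "{B \<in> sets_of (Suc m) n. 0 \<notin> B} = (if Suc m \<le> n then (\<lambda>B'. Suc ` B') ` sets_of (Suc m) (n - Suc m) else {})"
proof (cases "Suc m \<le> n")
  case True
  have "(\<lambda>B'. Suc ` B') ` sets_of (Suc m) (n - Suc m) \<subseteq> {B \<in> sets_of (Suc m) n. 0 \<notin> B}"
  proof
    fix B assume "B \<in> (\<lambda>B'. Suc ` B') ` sets_of (Suc m) (n - Suc m)"
    then obtain B' where B: "B = Suc ` B'" and B': "B' \<in> sets_of (Suc m) (n - Suc m)" by auto
    have f: "finite B'" and c: "card B' = Suc m" and s: "\<Sum>B' = n - Suc m + tri (Suc m)" using B' by (auto simp: sets_of_def)
    show "B \<in> {B \<in> sets_of (Suc m) n. 0 \<notin> B}"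
      using f c s True by (simp add: B sets_of_def card_image sum_Suc_image)
  qed
  moreover have "{B \<in> sets_of (Suc m) n. 0 \<notin> B} \<subseteq> (\<lambda>B'. Suc ` B') ` sets_of (Suc m) (n - Suc m)"
  proof
    fix B assume B: "B \<in> {B \<in> sets_of (Suc m) n. 0 \<notin> B}"
    have f: "finite B" and c: "card B = Suc m" and s: "\<Sum>B = n + tri (Suc m)" and z: "0 \<notin> B"
      using B by (auto simp: sets_of_def)
    define B' where "B' = (\<lambda>b. b - 1) ` B"
    have eB: "Suc ` B' = B" unfolding B'_def by (rule Suc_image_pre[OF z])
    have fB': "finite B'" using f by (simp add: B'_def)
    have cB': "card B' = Suc m" using c eB by (metis card_image inj_Suc inj_on_subset subset_UNIV)
    have "\<Sum>B = \<Sum>B' + Suc m" using eB fB' cB' by (metis sum_Suc_image)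
    then have "\<Sum>B' = n - Suc m + tri (Suc m)" using s True by simp
    then have "B' \<in> sets_of (Suc m) (n - Suc m)" using fB' cB' by (simp add: sets_of_def)
    then show "B \<in> (\<lambda>B'. Suc ` B') ` sets_of (Suc m) (n - Suc m)" using eB by blast
  qed
  ultimately show ?thesis using True by auto
next
  case False
  have "{B \<in> sets_of (Suc m) n. 0 \<notin> B} = {}"
  proof (rule ccontr)
    assume "{B \<in> sets_of (Suc m) n. 0 \<notin> B} \<noteq> {}"
    then obtain B where B: "B \<in> sets_of (Suc m) n" "0 \<notin> B" by auto
    have f: "finite B" and c: "card B = Suc m" and s: "\<Sum>B = n + tri (Suc m)"
      using B by (auto simp: sets_of_def)
    define B' where "B' = (\<lambda>b. b - 1) ` B"
    have eB: "Suc ` B' = B" unfolding B'_def by (rule Suc_image_pre[OF B(2)])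
    have fB': "finite B'" using f by (simp add: B'_def)
    have cB': "card B' = Suc m" using c eB by (metis card_image inj_Suc inj_on_subset subset_UNIV)
    have "\<Sum>B = \<Sum>B' + Suc m" using eB fB' cB' by (metis sum_Suc_image)
    moreover have "tri (Suc m) \<le> \<Sum>B'" using sum_ge_tri[OF fB'] cB' by simp
    ultimately show False using s False by simp
  qed
  then show ?thesis using False by simp
qed

lemma Phi_rec:
  "Phi (Suc m) z $ n = Phi m z $ n + (if Suc m \<le> n then z * Phi (Suc m) z $ (n - Suc m) else 0)"
proof -
  have split: "sets_of (Suc m) n = {B \<in> sets_of (Suc m) n. 0 \<in> B} \<union> {B \<in> sets_of (Suc m) n. 0 \<notin> B}"
    by auto
  have "Phi (Suc m) z $ n = (\<Sum>B\<in>{B \<in> sets_of (Suc m) n. 0 \<in> B}. z ^ gbm B)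
        + (\<Sum>B\<in>{B \<in> sets_of (Suc m) n. 0 \<notin> B}. z ^ gbm B)"
    unfolding Phi_def by (simp, subst split, rule sum.union_disjoint) auto
  also have "(\<Sum>B\<in>{B \<in> sets_of (Suc m) n. 0 \<in> B}. z ^ gbm B) = Phi m z $ n"
  proof -
    have inj: "inj_on (\<lambda>B'. insert 0 (Suc ` B')) (sets_of m n)"
    proof (rule inj_onI)
      fix X Y assume "insert 0 (Suc ` X) = insert 0 (Suc ` Y)"
      then have "Suc ` X = Suc ` Y" by (metis Diff_insert_absorb imageE nat.distinct(1))
      then show "X = Y" by (simp add: inj_image_eq_iff)
    qed
    show ?thesis unfolding sets_of_with0 Phi_def sum.reindex[OF inj] o_def
      by (simp add: gbm_ins0 sets_of_def)
  qed
  also have "(\<Sum>B\<in>{B \<in> sets_of (Suc m) n. 0 \<notin> B}. z ^ gbm B)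
      = (if Suc m \<le> n then z * Phi (Suc m) z $ (n - Suc m) else 0)"
  proof (cases "Suc m \<le> n")
    case True
    have inj: "inj_on (\<lambda>B'. Suc ` B') (sets_of (Suc m) (n - Suc m))"
      by (rule inj_onI) (simp add: inj_image_eq_iff)
    have "\<And>B. B \<in> sets_of (Suc m) (n - Suc m) \<Longrightarrow> z ^ gbm (Suc ` B) = z * z ^ gbm B"
    proof -
      fix B assume "B \<in> sets_of (Suc m) (n - Suc m)"
      then have "finite B" "B \<noteq> {}" by (auto simp: sets_of_def)
      then show "z ^ gbm (Suc ` B) = z * z ^ gbm B" by (simp add: gbm_Suc_image)
    qed
    then show ?thesis using True unfolding sets_of_without0 Phi_def
      by (simp add: sum.reindex[OF inj] sum_distrib_left del: sets_of_def)
  next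
    case False then show ?thesis by (simp add: sets_of_without0)
  qed
  finally show ?thesis .
qed

lemma Phi_Suc: "Phi (Suc m) z = Phi m z * Geo (Suc m) z"
proof -
  have "Phi (Suc m) z = Phi m z + fps_const z * fps_X ^ Suc m * Phi (Suc m) z"
    by (rule fps_ext) (simp add: Phi_rec fps_X_power_mult_nth mult.assoc not_le, arith)
  then have h: "(1 - fps_const z * fps_X ^ Suc m) * Phi (Suc m) z = Phi m z"
    by (simp add: algebra_simps)
  have g: "(1 - fps_const z * fps_X ^ Suc m) * Geo (Suc m) z = 1" by (rule Geo_inv) simp
  have "Phi (Suc m) z = 1 * Phi (Suc m) z" by simp
  also have "\<dots> = ((1 - fps_const z * fps_X ^ Suc m) * Geo (Suc m) z) * Phi (Suc m) z"
    by (simp only: g)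
  also have "\<dots> = Geo (Suc m) z * ((1 - fps_const z * fps_X ^ Suc m) * Phi (Suc m) z)"
    by (metis mult.assoc mult.commute)
  also have "\<dots> = Geo (Suc m) z * Phi m z" by (simp only: h)
  also have "\<dots> = Phi m z * Geo (Suc m) z" by (rule mult.commute)
  finally show ?thesis .
qed

lemma Phi_0: "Phi 0 z = 1"
proof (rule fps_ext)
  fix n
  have "sets_of 0 n = (if n = 0 then {{}} else {})"
    by (auto simp: sets_of_def card_eq_0_iff)
  then show "Phi 0 z $ n = (1::complex fps) $ n" by (simp add: Phi_def gbm_def)
qed

lemma Phi_prod: "Phi m z = (\<Prod>k\<in>{1..m}. Geo k z)"
proof (induction m)
  case 0 then show ?case by (simp add: Phi_0)
next
  case (Suc m)
  have "{1..Suc m} = insert (Suc m) {1..m}" by auto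
  then show ?case using Suc by (simp add: Phi_Suc mult.commute)
qed


definition equpto :: "nat \<Rightarrow> complex fps \<Rightarrow> complex fps \<Rightarrow> bool" where
  "equpto n A B \<longleftrightarrow> (\<forall>i\<le>n. A $ i = B $ i)"

lemma equpto_mult: "equpto n A B \<Longrightarrow> equpto n (A * C) (B * C)"
  unfolding equpto_def fps_mult_nth by (auto intro!: sum.cong)

lemma Geo_trunc: "n < k \<Longrightarrow> (A * Geo k z) $ n = A $ n"
proof -
  assume nk: "n < k"
  have "(A * Geo k z) $ n = (\<Sum>i=0..n. A $ i * Geo k z $ (n - i))" by (rule fps_mult_nth)
  also have "\<dots> = (\<Sum>i=0..n. if i = n then A $ i else 0)"
  proof (intro sum.cong refl)
    fix i assume i: "i \<in> {0..n}"
    show "A $ i * Geo k z $ (n - i) = (if i = n then A $ i else 0)"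
    proof (cases "i = n")
      case False
      then have "0 < n - i" "n - i < k" using i nk by auto
      then have "\<not> k dvd (n - i)" using nat_dvd_not_less by blast
      then show ?thesis using False by (simp add: Geo_def)
    qed (simp add: Geo_def)
  qed
  also have "\<dots> = A $ n" by simp
  finally show ?thesis .
qed

lemma prod_Geo_trunc:
  assumes "n \<le> M" "M \<le> M'"
  shows "(A * (\<Prod>k\<in>{1..M'}. Geo k z * Geo k z')) $ n = (A * (\<Prod>k\<in>{1..M}. Geo k z * Geo k z')) $ n"
  using assms(2)
proof (induction M' rule: dec_induct)
  case (step m)
  have e: "{1..Suc m} = insert (Suc m) {1..m}" by auto
  have "(A * (\<Prod>k\<in>{1..Suc m}. Geo k z * Geo k z')) $ n
      = ((A * (\<Prod>k\<in>{1..m}. Geo k z * Geo k z')) * Geo (Suc m) z * Geo (Suc m) z') $ n"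
    by (simp add: e ac_simps)
  also have "\<dots> = (A * (\<Prod>k\<in>{1..m}. Geo k z * Geo k z')) $ n"
    using step assms(1) by (simp add: Geo_trunc)
  finally show ?case using step by simp
qed simp

lemma fifth_root_prod:
  fixes a Y :: "'a::comm_ring_1"
  assumes "1 + a + a^2 + a^3 + a^4 = 0"
  shows "(1 - Y) * (1 - a * Y) * (1 - a^2 * Y) * (1 - a^3 * Y) * (1 - a^4 * Y) = 1 - Y^5"
proof -
  have a5: "a^5 = 1"
  proof -
    have "(a - 1) * (1 + a + a^2 + a^3 + a^4) = a^5 - 1" by (simp add: algebra_simps eval_nat_numeral)
    then show ?thesis using assms by simp
  qed
  define p where "p = a + a^4"
  define q where "q = a^2 + a^3"
  have h1: "(1 - a*Y)*(1 - a^4*Y) = 1 - p*Y + a^5*Y^2" unfolding p_def by (simp add: algebra_simps eval_nat_numeral)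
  have h2: "(1 - a^2*Y)*(1 - a^3*Y) = 1 - q*Y + a^5*Y^2" unfolding q_def by (simp add: algebra_simps eval_nat_numeral)
  have pq1: "p + q = -1" using assms unfolding p_def q_def by (simp add: algebra_simps eq_neg_iff_add_eq_0)
  have "p * q = a^3 + a^4 + a^5 * a + a^5 * a^2" unfolding p_def q_def by (simp add: algebra_simps eval_nat_numeral)
  then have pq2: "p * q = -1" using pq1 a5 unfolding p_def q_def by (simp add: algebra_simps eq_neg_iff_add_eq_0)
  have "(1 - Y) * (1 - a * Y) * (1 - a^2 * Y) * (1 - a^3 * Y) * (1 - a^4 * Y)
      = (1 - Y) * ((1 - a*Y)*(1 - a^4*Y)) * ((1 - a^2*Y)*(1 - a^3*Y))" by (simp add: algebra_simps eval_nat_numeral)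
  also have "\<dots> = (1 - Y) * (1 - p*Y + Y^2) * (1 - q*Y + Y^2)" using h1 h2 a5 by simp
  also have "\<dots> = 1 - Y^5 + (p + q + 1) * (Y^4 - Y) + (p + q + 1 + p*q + 1) * (Y^2 - Y^3)" by (simp add: algebra_simps eval_nat_numeral)
  also have "\<dots> = 1 - Y^5" using pq1 pq2 by simp
  finally show ?thesis .
qed


lemma prod_coeff:
  fixes a :: complex
  assumes "finite K"
  shows "(\<Prod>k\<in>K. 1 - fps_const a * fps_X ^ k) $ u = (\<Sum>A\<in>Pow K. if \<Sum>A = u then (-a)^card A else 0)"
  using assms
proof (induction K arbitrary: u rule: finite_induct)
  case empty then show ?case by simp
next
  case (insert k K)
  have inj: "inj_on (insert k) (Pow K)"
  proof (rule inj_onI)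
    fix X Y assume "X \<in> Pow K" "Y \<in> Pow K" "insert k X = insert k Y"
    then show "X = Y" using insert.hyps(2) by (metis Pow_iff insert_ident subsetD)
  qed
  have disj: "Pow K \<inter> insert k ` Pow K = {}" using insert.hyps(2) by auto
  have "(\<Sum>A\<in>Pow (insert k K). if \<Sum>A = u then (-a)^card A else 0)
      = (\<Sum>A\<in>Pow K. if \<Sum>A = u then (-a)^card A else 0)
        + (\<Sum>A\<in>insert k ` Pow K. if \<Sum>A = u then (-a)^card A else 0)"
    unfolding Pow_insert by (rule sum.union_disjoint) (use insert.hyps disj in auto)
  also have "(\<Sum>A\<in>insert k ` Pow K. if \<Sum>A = u then (-a)^card A else 0)
      = (\<Sum>A\<in>Pow K. if \<Sum>A + k = u then (-a) * (-a)^card A else 0)"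
  proof -
    have "\<And>A. A \<in> Pow K \<Longrightarrow> (if \<Sum>(insert k A) = u then (-a)^card (insert k A) else 0)
         = (if \<Sum>A + k = u then (-a) * (-a)^card A else 0)"
    proof -
      fix A assume "A \<in> Pow K"
      then have "finite A" "k \<notin> A" using insert.hyps finite_subset by auto
      then show "(if \<Sum>(insert k A) = u then (-a)^card (insert k A) else 0)
         = (if \<Sum>A + k = u then (-a) * (-a)^card A else 0)" by (simp add: add.commute)
    qed
    then show ?thesis by (simp add: sum.reindex[OF inj])
  qed
  also have "\<dots> = (if k \<le> u then (-a) * (\<Sum>A\<in>Pow K. if \<Sum>A = u - k then (-a)^card A else 0) else 0)"
    by (auto simp: sum_distrib_left intro!: sum.cong sum.neutral)
  finally have r: "(\<Sum>A\<in>Pow (insert k K). if \<Sum>A = u then (-a)^card A else 0)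
     = (\<Sum>A\<in>Pow K. if \<Sum>A = u then (-a)^card A else 0)
       + (if k \<le> u then (-a) * (\<Sum>A\<in>Pow K. if \<Sum>A = u - k then (-a)^card A else 0) else 0)" .
  have "(\<Prod>k\<in>insert k K. 1 - fps_const a * fps_X ^ k) =
      (\<Prod>k\<in>K. 1 - fps_const a * fps_X ^ k) - fps_const a * (fps_X ^ k * (\<Prod>k\<in>K. 1 - fps_const a * fps_X ^ k))"
    using insert.hyps by (simp add: algebra_simps)
  then show ?case using r insert.IH by (simp add: fps_X_power_mult_nth not_less)
qed

lemma conv_sets:
  fixes P1 P2 :: "complex fps" and f :: "'a \<Rightarrow> nat" and h :: "'b \<Rightarrow> nat" and SA :: "'a set" and SC :: "'b set"
  assumes "finite SA" "finite SC"
    and "\<And>t. P1 $ t = (\<Sum>A\<in>SA. if f A = t then g A else 0)"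
    and "\<And>t. P2 $ t = (\<Sum>C\<in>SC. if h C = t then k C else 0)"
  shows "(P1 * P2) $ i = (\<Sum>p\<in>SA \<times> SC. if f (fst p) + h (snd p) = i then g (fst p) * k (snd p) else 0)"
proof -
  have "(P1 * P2) $ i = (\<Sum>t=0..i. P1 $ t * P2 $ (i - t))" by (rule fps_mult_nth)
  also have "\<dots> = (\<Sum>t=0..i. \<Sum>A\<in>SA. \<Sum>C\<in>SC. if f A = t \<and> h C = i - t then g A * k C else 0)"
    unfolding assms(3,4) sum_product by (intro sum.cong refl) simp
  also have "\<dots> = (\<Sum>A\<in>SA. \<Sum>C\<in>SC. \<Sum>t=0..i. if f A = t \<and> h C = i - t then g A * k C else 0)"
    by (subst sum.swap, intro sum.cong refl, rule sum.swap)
  also have "\<dots> = (\<Sum>A\<in>SA. \<Sum>C\<in>SC. if f A + h C = i then g A * k C else 0)"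
  proof (intro sum.cong refl)
    fix A C
    have "(\<Sum>t=0..i. if f A = t \<and> h C = i - t then g A * k C else 0)
        = (\<Sum>t=0..i. if t = f A then (if h C = i - f A then g A * k C else 0) else 0)"
      by (intro sum.cong refl) auto
    also have "\<dots> = (if f A + h C = i then g A * k C else 0)"
      by (simp add: sum.delta') auto
    finally show "(\<Sum>t=0..i. if f A = t \<and> h C = i - t then g A * k C else 0)
        = (if f A + h C = i then g A * k C else 0)" .
  qed
  also have "\<dots> = (\<Sum>p\<in>SA \<times> SC. if f (fst p) + h (snd p) = i then g (fst p) * k (snd p) else 0)"
    by (simp add: sum.cartesian_product split_beta)
  finally show ?thesis .
qed

lemma sum_lessThan_tri: "\<Sum>{0..<L} = tri L"
  by (induction L) (simp_all add: tri_Suc)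

definition phiB :: "nat \<Rightarrow> nat set \<times> nat set \<Rightarrow> nat set" where
  "phiB L p = (\<lambda>a. a + L) ` fst p \<union> ({0..<L} - (\<lambda>c. L - c) ` snd p)"

definition psiB :: "nat \<Rightarrow> nat set \<Rightarrow> nat set \<times> nat set" where
  "psiB L B = ((\<lambda>b. b - L) ` {b\<in>B. L \<le> b}, (\<lambda>g. L - g) ` ({0..<L} - B))"

lemma phiB_props:
  assumes "finite A" "C \<subseteq> {1..L}"
  shows "finite (phiB L (A, C))"
    and "int (card (phiB L (A, C))) = int L + int (card A) - int (card C)"
    and "int (\<Sum>(phiB L (A, C))) = int (\<Sum>A) + int (\<Sum>C) + int L * (int (card A) - int (card C)) + int (tri L)"
proof -
  define X1 where "X1 = (\<lambda>a. a + L) ` A"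
  define R where "R = (\<lambda>c. L - c) ` C"
  define X2 where "X2 = {0..<L} - R"
  have fC: "finite C" using assms(2) finite_subset by blast
  have e: "phiB L (A, C) = X1 \<union> X2" by (simp add: phiB_def X1_def X2_def R_def)
  have RL: "R \<subseteq> {0..<L}" using assms(2) by (auto simp: R_def)
  have injC: "inj_on (\<lambda>c. L - c) C"
  proof (rule inj_onI)
    fix x y assume "x \<in> C" "y \<in> C" "L - x = L - y"
    moreover then have "x \<le> L" "y \<le> L" using assms(2) by auto
    ultimately show "x = y" by arith
  qed
  have fX1: "finite X1" using assms(1) by (simp add: X1_def)
  have fX2: "finite X2" by (simp add: X2_def)
  have disj: "X1 \<inter> X2 = {}" by (auto simp: X1_def X2_def)
  show "finite (phiB L (A, C))" using e fX1 fX2 by simp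
  have cX1: "card X1 = card A" by (simp add: X1_def card_image)
  have cR: "card R = card C" by (simp add: R_def card_image[OF injC])
  have cX2: "card X2 = L - card C" using RL cR by (simp add: X2_def card_Diff_subset finite_subset)
  have cCL: "card C \<le> L" using card_mono[OF _ assms(2)] by simp
  show "int (card (phiB L (A, C))) = int L + int (card A) - int (card C)"
    using e disj fX1 fX2 cX1 cX2 cCL by (simp add: card_Un_disjoint)
  have sX1: "int (\<Sum>X1) = int (\<Sum>A) + int L * int (card A)"
  proof -
    have "\<Sum>X1 = (\<Sum>a\<in>A. a + L)" by (simp add: X1_def sum.reindex)
    then show ?thesis by (simp add: sum.distrib)
  qed
  have sR: "int (\<Sum>R) = int L * int (card C) - int (\<Sum>C)"
  proof -
    have "\<Sum>R = (\<Sum>c\<in>C. L - c)" by (simp add: R_def sum.reindex[OF injC])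
    then have "int (\<Sum>R) = (\<Sum>c\<in>C. int L - int c)"
      using assms(2) by (auto simp: of_nat_diff intro!: sum.cong)
    then show ?thesis by (simp add: sum_subtractf)
  qed
  have sX2: "int (\<Sum>X2) = int (tri L) - int (\<Sum>R)"
  proof -
    have "\<Sum>{0..<L} = \<Sum>X2 + \<Sum>R"
      using RL by (simp add: X2_def sum.subset_diff[of R "{0..<L}" "\<lambda>x. x"])
    then show ?thesis by (simp add: sum_lessThan_tri)
  qed
  show "int (\<Sum>(phiB L (A, C))) = int (\<Sum>A) + int (\<Sum>C) + int L * (int (card A) - int (card C)) + int (tri L)"
    using e disj fX1 fX2 sX1 sX2 sR by (simp add: sum.union_disjoint algebra_simps)
qed

lemma psiB_phiB:
  assumes "C \<subseteq> {1..L}"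
  shows "psiB L (phiB L (A, C)) = (A, C)"
proof -
  have "{b \<in> phiB L (A, C). L \<le> b} = (\<lambda>a. a + L) ` A" by (auto simp: phiB_def)
  then have 1: "(\<lambda>b. b - L) ` {b \<in> phiB L (A, C). L \<le> b} = A" by (simp add: image_image)
  have "{0..<L} - phiB L (A, C) = (\<lambda>c. L - c) ` C"
  proof
    show "{0..<L} - phiB L (A, C) \<subseteq> (\<lambda>c. L - c) ` C" by (auto simp: phiB_def)
    show "(\<lambda>c. L - c) ` C \<subseteq> {0..<L} - phiB L (A, C)"
    proof
      fix x assume "x \<in> (\<lambda>c. L - c) ` C"
      then obtain c where c: "c \<in> C" "x = L - c" by auto
      then have "1 \<le> c" "c \<le> L" using assms by auto
      then show "x \<in> {0..<L} - phiB L (A, C)" using c by (auto simp: phiB_def)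
    qed
  qed
  then have "(\<lambda>g. L - g) ` ({0..<L} - phiB L (A, C)) = (\<lambda>c. L - (L - c)) ` C" by (simp add: image_image)
  also have "\<dots> = C" using assms by (force intro: image_eqI)
  finally show ?thesis using 1 by (simp add: psiB_def)
qed

lemma phiB_psiB: "phiB L (psiB L B) = B"
proof -
  have 1: "(\<lambda>a. a + L) ` (\<lambda>b. b - L) ` {b \<in> B. L \<le> b} = {b \<in> B. L \<le> b}"
    by (force simp: image_image intro: image_eqI)
  have 2: "(\<lambda>c. L - c) ` (\<lambda>g. L - g) ` ({0..<L} - B) = {0..<L} - B"
    by (force simp: image_image intro: image_eqI)
  show ?thesis unfolding phiB_def psiB_def fst_conv snd_conv 1 2 by auto
qed

lemma psiB_props: "finite B \<Longrightarrow> finite (fst (psiB L B)) \<and> snd (psiB L B) \<subseteq> {1..L}"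
  by (auto simp: psiB_def)


lemma two_tri: "2 * tri n = n * (n - 1)"
  unfolding tri_def by (induction n) (auto simp: algebra_simps)

lemma two_tri_int: "2 * int (tri n) = int n * (int n - 1)"
proof -
  have "int (2 * tri n) = int (n * (n - 1))" by (simp only: two_tri)
  then show ?thesis by (cases n) (auto simp: algebra_simps)
qed

lemma prod_Geo_trunc1:
  assumes "n \<le> M" "M \<le> M'"
  shows "(\<Prod>k\<in>{1..M'}. Geo k z) $ n = (\<Prod>k\<in>{1..M}. Geo k z) $ n"
  using assms(2)
proof (induction M' rule: dec_induct)
  case (step m)
  have e: "{1..Suc m} = insert (Suc m) {1..m}" by auto
  have "(\<Prod>k\<in>{1..Suc m}. Geo k z) $ n = ((\<Prod>k\<in>{1..m}. Geo k z) * Geo (Suc m) z) $ n"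
    by (simp add: e ac_simps)
  also have "\<dots> = (\<Prod>k\<in>{1..m}. Geo k z) $ n"
    using step assms(1) by (simp add: Geo_trunc)
  finally show ?case using step by simp
qed simp

lemma Phi_1_nth: "Phi m 1 $ r = of_nat (card (sets_of m r))"
  by (simp add: Phi_def)

lemma sets_of_stable:
  assumes "r \<le> m" "r \<le> M"
  shows "card (sets_of m r) = card (sets_of M r)"
proof -
  have "\<And>a b. r \<le> a \<Longrightarrow> a \<le> b \<Longrightarrow> Phi b 1 $ r = Phi a 1 $ r"
    unfolding Phi_prod by (rule prod_Geo_trunc1)
  then have "Phi m 1 $ r = Phi M 1 $ r" using assms by (cases "m \<le> M") (metis nat_le_linear)+
  then show ?thesis unfolding Phi_1_nth by simp
qed

definition Uprod :: "nat \<Rightarrow> complex \<Rightarrow> complex \<Rightarrow> complex fps" where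
  "Uprod M x y = (\<Prod>k\<in>{0..M}. 1 - fps_const x * fps_X ^ k) * (\<Prod>k\<in>{1..M}. 1 - fps_const y * fps_X ^ k)"

definition AC :: "nat \<Rightarrow> nat \<Rightarrow> (nat set \<times> nat set) set" where
  "AC M i = {p \<in> Pow {0..M} \<times> Pow {1..M}. \<Sum>(fst p) + \<Sum>(snd p) = i}"

definition BB :: "nat \<Rightarrow> nat \<Rightarrow> nat set set" where
  "BB L i = {B. finite B \<and> \<Sum>B + L * L = i + L * card B + tri L}"

lemma U_coeff: "Uprod M x y $ i = (\<Sum>p\<in>AC M i. (-x) ^ card (fst p) * (-y) ^ card (snd p))"
proof -
  have "Uprod M x y $ i = (\<Sum>p\<in>Pow {0..M} \<times> Pow {1..M}.
      if \<Sum>(fst p) + \<Sum>(snd p) = i then (-x) ^ card (fst p) * (-y) ^ card (snd p) else 0)"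
    unfolding Uprod_def
    by (rule conv_sets) (simp_all add: prod_coeff)
  also have "\<dots> = (\<Sum>p\<in>AC M i. (-x) ^ card (fst p) * (-y) ^ card (snd p))"
    unfolding AC_def by (subst sum.inter_filter) simp_all
  finally show ?thesis .
qed

lemma weight_powi:
  fixes x y :: complex
  assumes "x * y = 1"
  shows "(-x) ^ a * (-y) ^ c = (-x) powi (int a - int c)"
proof -
  have x0: "x \<noteq> 0" using assms by auto
  have y: "-y = inverse (-x)" using inverse_unique[OF assms] by simp
  have "(-x) powi (int a - int c) = (-x) powi (int a) / (-x) powi (int c)"
    using x0 by (simp add: power_int_diff)
  also have "\<dots> = (-x) ^ a * (inverse (-x)) ^ c" by (simp only: power_int_of_nat divide_inverse power_inverse)
  finally show ?thesis using y by simp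
qed

lemma arith1: "(cB::int) = L + a - c \<Longrightarrow> sB = sA + sC + L*(a-c) + t \<Longrightarrow> sA + sC = i \<Longrightarrow> sB + L*L = i + L*cB + t"
proof -
  assume h: "cB = L + a - c" "sB = sA + sC + L*(a-c) + t" "sA + sC = i"
  have "L * cB = L*L + L*a - L*c" by (subst h(1)) (simp add: algebra_simps)
  moreover have "L*(a-c) = L*a - L*c" by (simp add: algebra_simps)
  ultimately show ?thesis using h by linarith
qed

lemma arith2: "(cB::int) = L + a - c \<Longrightarrow> sB = sA + sC + L*(a-c) + t \<Longrightarrow> sB + L*L = i + L*cB + t \<Longrightarrow> sA + sC = i"
proof -
  assume h: "cB = L + a - c" "sB = sA + sC + L*(a-c) + t" "sB + L*L = i + L*cB + t"
  have "L * cB = L*L + L*a - L*c" by (subst h(1)) (simp add: algebra_simps)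
  moreover have "L*(a-c) = L*a - L*c" by (simp add: algebra_simps)
  ultimately show ?thesis using h by linarith
qed

lemma phiB_maps:
  assumes "p \<in> AC M i" "M < L"
  shows "phiB L p \<in> BB L i" "int (card (phiB L p)) - int L = int (card (fst p)) - int (card (snd p))"
proof -
  obtain A C where p: "p = (A, C)" by fastforce
  have A: "A \<subseteq> {0..M}" and C: "C \<subseteq> {1..M}" and s: "\<Sum>A + \<Sum>C = i" using assms(1) by (auto simp: AC_def p)
  have fA: "finite A" using A finite_subset by blast
  have CL: "C \<subseteq> {1..L}" using C assms(2) by auto
  note pr = phiB_props[OF fA CL]
  have s': "int (\<Sum>A) + int (\<Sum>C) = int i" using s by linarith
  have "int (\<Sum>(phiB L (A, C))) + int L * int L = int i + int L * int (card (phiB L (A, C))) + int (tri L)"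
    by (rule arith1[OF pr(2) pr(3) s'])
  then have "int (\<Sum>(phiB L (A, C)) + L * L) = int (i + L * card (phiB L (A, C)) + tri L)" by simp
  then have "\<Sum>(phiB L (A, C)) + L * L = i + L * card (phiB L (A, C)) + tri L" by (simp only: of_nat_eq_iff)
  then show "phiB L p \<in> BB L i" using pr(1) by (simp add: BB_def p)
  show "int (card (phiB L p)) - int L = int (card (fst p)) - int (card (snd p))" using pr(2) by (simp add: p)
qed

lemma psiB_maps:
  assumes "B \<in> BB L i" "i \<le> M"
  shows "psiB L B \<in> AC M i"
proof -
  obtain A C where p: "psiB L B = (A, C)" by fastforce
  have fB: "finite B" using assms(1) by (simp add: BB_def)
  have fA: "finite A" and CL: "C \<subseteq> {1..L}" using psiB_props[OF fB, of L] by (simp_all add: p)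
  have eB: "phiB L (A, C) = B" using phiB_psiB[of L B] by (simp add: p)
  note pr = phiB_props[OF fA CL]
  have e: "\<Sum>B + L * L = i + L * card B + tri L" using assms(1) by (simp add: BB_def)
  then have "int (\<Sum>B + L * L) = int (i + L * card B + tri L)" by (simp only:)
  then have "int (\<Sum>B) + int L * int L = int i + int L * int (card B) + int (tri L)" by (simp only: of_nat_add of_nat_mult)
  then have "int (\<Sum>A) + int (\<Sum>C) = int i" using arith2[OF pr(2) pr(3)] unfolding eB by simp
  then have s: "\<Sum>A + \<Sum>C = i" by linarith
  have fC: "finite C" using CL finite_subset by blast
  have "A \<subseteq> {0..M}"
  proof
    fix a assume "a \<in> A"
    then have "a \<le> \<Sum>A" using fA by (intro member_le_sum) auto
    then show "a \<in> {0..M}" using s assms(2) by simp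
  qed
  moreover have "C \<subseteq> {1..M}"
  proof
    fix c assume c: "c \<in> C"
    then have "c \<le> \<Sum>C" using fC by (intro member_le_sum) auto
    moreover have "1 \<le> c" using c CL by auto
    ultimately show "c \<in> {1..M}" using s assms(2) by simp
  qed
  ultimately show ?thesis using s by (simp add: AC_def p)
qed

lemma bij_phiB:
  assumes "i \<le> M" "M < L"
  shows "bij_betw (phiB L) (AC M i) (BB L i)"
proof (rule bij_betw_byWitness[where f' = "psiB L"])
  show "\<forall>a\<in>AC M i. psiB L (phiB L a) = a"
  proof
    fix p assume "p \<in> AC M i"
    then have "snd p \<subseteq> {1..L}" using assms by (auto simp: AC_def)
    then show "psiB L (phiB L p) = p" using psiB_phiB[of "snd p" L "fst p"] by simp
  qed
  show "\<forall>a'\<in>BB L i. phiB L (psiB L a') = a'" by (simp add: phiB_psiB)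
  show "phiB L ` AC M i \<subseteq> BB L i" using phiB_maps(1) assms by blast
  show "psiB L ` BB L i \<subseteq> AC M i" using psiB_maps assms by blast
qed

lemma U_BB:
  assumes "x * y = 1" "i \<le> M" "M < L"
  shows "Uprod M x y $ i = (\<Sum>B\<in>BB L i. (-x) powi (int (card B) - int L))"
proof -
  have "Uprod M x y $ i = (\<Sum>p\<in>AC M i. (-x) powi (int (card (phiB L p)) - int L))"
    unfolding U_coeff using phiB_maps(2)[OF _ assms(3)] weight_powi[OF assms(1)]
    by (intro sum.cong refl) simp
  also have "\<dots> = (\<Sum>B\<in>BB L i. (-x) powi (int (card B) - int L))"
    by (rule sum.reindex_bij_betw[OF bij_phiB[OF assms(2,3)]])
  finally show ?thesis .
qed


definition tj :: "int \<Rightarrow> nat" where "tj j = nat (j * (j - 1) div 2)"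

lemma even_jj: "even ((j::int) * (j - 1))"
  by (cases "even j") auto

lemma two_tj: "2 * int (tj j) = j * (j - 1)"
proof -
  have "0 \<le> j * (j - 1)" by (cases "j \<le> 0") (auto simp: mult_nonpos_nonpos)
  then show ?thesis using even_jj[of j] by (auto simp: tj_def)
qed

definition Theta :: "nat \<Rightarrow> complex \<Rightarrow> complex fps" where
  "Theta M x = (\<Sum>j\<in>{-int M..int M+1}. fps_const ((-x) powi j) * fps_X ^ tj j)"

lemma Theta_P:
  "(Theta M x * Phi M 1) $ i = (\<Sum>j\<in>{-int M..int M+1}. (-x) powi j *
      (if tj j \<le> i then of_nat (card (sets_of M (i - tj j))) else 0))"
  unfolding Theta_def sum_distrib_right fps_sum_nth
  by (intro sum.cong refl) (simp add: mult.assoc fps_X_power_mult_nth Phi_1_nth)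

lemma Theta_nth:
  "Theta M x $ i = (\<Sum>j\<in>{-int M..int M+1}. if tj j = i then (-x) powi j else 0)"
  unfolding Theta_def fps_sum_nth by (intro sum.cong refl) simp

lemma j_range:
  fixes j :: int
  assumes "j * (j - 1) \<le> 2 * int M"
  shows "-int M \<le> j \<and> j \<le> int M + 1"
proof (rule ccontr)
  assume "\<not> (-int M \<le> j \<and> j \<le> int M + 1)"
  then consider "j < - int M" | "j > int M + 1" by linarith
  then show False
  proof cases
    case 1
    then have "(int M + 1) * (int M + 2) \<le> (-j) * (-j + 1)"
      by (intro mult_mono) auto
    also have "(-j) * (-j + 1) = j * (j - 1)" by (simp add: algebra_simps)
    finally have h: "(int M + 1) * (int M + 2) \<le> j * (j - 1)" .
    have "0 \<le> int M * int M" by simp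
    moreover have "(int M + 1) * (int M + 2) = int M * int M + 3 * int M + 2" by (simp add: algebra_simps)
    ultimately show False using assms h by linarith
  next
    case 2
    then have "(int M + 2) * (int M + 1) \<le> j * (j - 1)"
      by (intro mult_mono) auto
    moreover have "0 \<le> int M * int M" by simp
    moreover have "(int M + 2) * (int M + 1) = int M * int M + 3 * int M + 2" by (simp add: algebra_simps)
    moreover have "j * (j - 1) = j * j - j" by (simp_all add: algebra_simps)
    ultimately show False using assms by linarith
  qed
qed

lemma arith3:
  fixes sB cB L i tL :: int
  assumes "cB * (cB - 1) \<le> 2 * sB" "sB + L * L = i + L * cB + tL" "2 * tL = L * (L - 1)"
  shows "(cB - L) * (cB - L - 1) \<le> 2 * i"
proof -
  have e1: "(cB - L) * (cB - L - 1) = cB * cB - 2 * (L * cB) + L * L + L - cB"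
    by (simp add: algebra_simps)
  have e2: "L * (L - 1) = L * L - L" by (simp add: algebra_simps)
  have e3: "cB * (cB - 1) = cB * cB - cB" by (simp add: algebra_simps)
  show ?thesis using assms e1 e2 e3 by linarith
qed

lemma BB_range:
  assumes "B \<in> BB L i"
  shows "(int (card B) - int L) * (int (card B) - int L - 1) \<le> 2 * int i"
proof -
  have f: "finite B" and e: "\<Sum>B + L * L = i + L * card B + tri L" using assms by (auto simp: BB_def)
  have "tri (card B) \<le> \<Sum>B" by (rule sum_ge_tri[OF f])
  then have "int (tri (card B)) \<le> int (\<Sum>B)" by (simp only: of_nat_le_iff)
  then have "2 * int (tri (card B)) \<le> 2 * int (\<Sum>B)" by linarith
  then have a1: "int (card B) * (int (card B) - 1) \<le> 2 * int (\<Sum>B)" by (simp only: two_tri_int)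
  have a2: "int (\<Sum>B) + int L * int L = int i + int L * int (card B) + int (tri L)"
    using e by (metis of_nat_add of_nat_mult)
  show ?thesis by (rule arith3[OF a1 a2 two_tri_int])
qed

lemma arith4:
  fixes sB m L i tL tm t j :: int
  assumes "2 * tm = m * (m - 1)" "2 * tL = L * (L - 1)" "2 * t = j * (j - 1)" "m = L + j"
  shows "sB + L * L = i + L * m + tL \<longleftrightarrow> sB = i - t + tm"
proof -
  have "2 * (L * m + tL - L * L) = 2 * (tm - t)"
    using assms by (simp add: algebra_simps)
  then have "L * m + tL - L * L = tm - t" by simp
  then show ?thesis by linarith
qed

lemma BB_fiber:
  assumes "i \<le> M" "j \<in> {-int M..int M+1}" "L = 2*M+2"
  shows "card {B \<in> BB L i. int (card B) - int L = j}
       = (if tj j \<le> i then card (sets_of M (i - tj j)) else 0)"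
proof -
  note L_def = assms(3)
  define m where "m = nat (int L + j)"
  have mL: "int m = int L + j" using assms(2) by (simp add: m_def L_def)
  have Mm: "M \<le> m" using assms(2) mL by (simp add: L_def)
  show ?thesis
  proof (cases "tj j \<le> i")
    case True
    have "{B \<in> BB L i. int (card B) - int L = j} = sets_of m (i - tj j)"
    proof (intro set_eqI iffI)
      fix B assume B: "B \<in> {B \<in> BB L i. int (card B) - int L = j}"
      then have f: "finite B" and e: "\<Sum>B + L * L = i + L * card B + tri L" and c: "card B = m"
        using mL by (auto simp: BB_def)
      have "int (\<Sum>B) + int L * int L = int i + int L * int m + int (tri L)"
        using e c by (metis of_nat_add of_nat_mult)
      then have "int (\<Sum>B) = int i - int (tj j) + int (tri m)"
        using arith4[OF two_tri_int two_tri_int two_tj mL] by blast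
      then have "\<Sum>B = i - tj j + tri m" using True by linarith
      then show "B \<in> sets_of m (i - tj j)" using f c by (simp add: sets_of_def)
    next
      fix B assume B: "B \<in> sets_of m (i - tj j)"
      then have f: "finite B" and c: "card B = m" and e: "\<Sum>B = i - tj j + tri m"
        by (auto simp: sets_of_def)
      have "int (\<Sum>B) = int i - int (tj j) + int (tri m)" using e True by simp
      then have "int (\<Sum>B) + int L * int L = int i + int L * int m + int (tri L)"
        using arith4[OF two_tri_int two_tri_int two_tj mL] by blast
      then have "\<Sum>B + L * L = i + L * card B + tri L" using c by (metis of_nat_add of_nat_mult of_nat_eq_iff)
      then show "B \<in> {B \<in> BB L i. int (card B) - int L = j}" using f c mL by (simp add: BB_def)
    qed
    moreover have "card (sets_of m (i - tj j)) = card (sets_of M (i - tj j))"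
      using Mm assms(1) by (intro sets_of_stable) auto
    ultimately show ?thesis using True by simp
  next
    case False
    have "{B \<in> BB L i. int (card B) - int L = j} = {}"
    proof (rule ccontr)
      assume "{B \<in> BB L i. int (card B) - int L = j} \<noteq> {}"
      then obtain B where B: "B \<in> BB L i" "int (card B) - int L = j" by auto
      have "j * (j - 1) \<le> 2 * int i" using BB_range[OF B(1)] B(2) by simp
      then have "2 * int (tj j) \<le> 2 * int i" by (simp only: two_tj)
      then show False using False by simp
    qed
    then have "card {B \<in> BB L i. int (card B) - int L = j} = 0" by (metis card.empty)
    then show ?thesis using False by simp
  qed
qed

lemma JTP_trunc:
  assumes "x * y = 1" "i \<le> M"
  shows "Uprod M x y $ i = (Theta M x * Phi M 1) $ i"
proof -
  define L where "L = 2*M+2"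
  define R where "R = {-int M..int M+1}"
  have hML: "M < L" by (simp add: L_def)
  have finAC: "finite (AC M i)" unfolding AC_def
    by (rule finite_subset[of _ "Pow {0..M} \<times> Pow {1..M}"]) auto
  have fin: "finite (BB L i)"
    using bij_betw_imp_surj_on[OF bij_phiB[OF assms(2) hML]] finAC by (metis finite_imageI)
  have img: "(\<lambda>B. int (card B) - int L) ` BB L i \<subseteq> R"
  proof
    fix j assume "j \<in> (\<lambda>B. int (card B) - int L) ` BB L i"
    then obtain B where B: "B \<in> BB L i" "j = int (card B) - int L" by auto
    have "j * (j - 1) \<le> 2 * int M" using BB_range[OF B(1)] B(2) assms(2) by simp
    then show "j \<in> R" using j_range unfolding R_def by auto
  qed
  have "Uprod M x y $ i = (\<Sum>B\<in>BB L i. (-x) powi (int (card B) - int L))"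
    by (rule U_BB[OF assms hML])
  also have "\<dots> = (\<Sum>j\<in>R. \<Sum>B\<in>{B \<in> BB L i. int (card B) - int L = j}. (-x) powi (int (card B) - int L))"
    by (rule sum.group[symmetric, OF fin _ img]) (simp add: R_def)
  also have "\<dots> = (\<Sum>j\<in>R. (-x) powi j * of_nat (card {B \<in> BB L i. int (card B) - int L = j}))"
    by (intro sum.cong refl) simp
  also have "\<dots> = (\<Sum>j\<in>R. (-x) powi j * (if tj j \<le> i then of_nat (card (sets_of M (i - tj j))) else 0))"
    by (intro sum.cong refl) (simp add: BB_fiber[OF assms(2) _ L_def] R_def)
  also have "\<dots> = (Theta M x * Phi M 1) $ i" by (simp add: Theta_P R_def)
  finally show ?thesis .
qed


lemma root5_sum:
  fixes z :: complex
  assumes "z ^ 5 = 1" "z \<noteq> 1"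
  shows "1 + z + z^2 + z^3 + z^4 = 0"
proof -
  have "(z - 1) * (1 + z + z^2 + z^3 + z^4) = z^5 - 1" by (simp add: algebra_simps eval_nat_numeral)
  then have "(z - 1) * (1 + z + z^2 + z^3 + z^4) = 0" using assms(1) by simp
  then show ?thesis using assms(2) by simp
qed

lemma powi_5dvd:
  fixes z :: complex
  assumes "z ^ 5 = 1" "5 dvd k"
  shows "z powi k = 1"
proof -
  obtain q where k: "k = 5 * q" using assms(2) by auto
  have "z powi k = (z powi 5) powi q" unfolding k by (rule power_int_mult)
  also have "z powi 5 = 1" using assms(1) by (metis power_int_of_nat of_nat_numeral)
  finally show ?thesis by simp
qed

lemma jj_mod5:
  fixes j :: int
  shows "(j * (j - 1)) mod 5 = ((j mod 5) * ((j mod 5) - 1)) mod 5"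
proof -
  have "(j*(j-1)) mod 5 = ((j mod 5) * ((j - 1) mod 5)) mod 5" by (simp add: mod_mult_eq)
  also have "(j-1) mod 5 = (j mod 5 - 1) mod 5" by (simp add: mod_diff_left_eq)
  also have "((j mod 5) * ((j mod 5 - 1) mod 5)) mod 5 = ((j mod 5) * (j mod 5 - 1)) mod 5"
    by (simp add: mod_mult_right_eq)
  finally show ?thesis .
qed

lemma tj_mod:
  fixes j :: int
  assumes "tj j = i" "i mod 5 \<in> {2,3,4}"
  shows "i mod 5 = 3 \<and> j mod 5 = 3"
proof -
  have e: "j * (j - 1) = 2 * int i" using two_tj[of j] assms(1) by simp
  have "(2 * int i) mod 5 = (2 * (int i mod 5)) mod 5" by (simp add: mod_mult_right_eq)
  moreover have "int i mod 5 = int (i mod 5)" by (simp add: zmod_int)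
  ultimately have m: "(j * (j - 1)) mod 5 = (2 * int (i mod 5)) mod 5" using e by simp
  have r: "j mod 5 \<in> {0,1,2,3,4}" by auto
  have h: "(j*(j-1)) mod 5 = ((j mod 5) * ((j mod 5) - 1)) mod 5" by (rule jj_mod5)
  have a: "(j * (j - 1)) mod 5 \<in> {0, 2, 1}"
    using r h by auto
  have b: "j mod 5 \<noteq> 3 \<Longrightarrow> (j * (j - 1)) mod 5 \<in> {0, 2}"
    using r h by auto
  from assms(2) consider "i mod 5 = 2" | "i mod 5 = 3" | "i mod 5 = 4" by auto
  then show ?thesis
  proof cases
    case 1 then show ?thesis using a m by simp
  next
    case 3 then show ?thesis using a m by simp
  next
    case 2 then show ?thesis using b m by fastforce
  qed
qed

lemma Theta_vanish:
  fixes z :: complex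
  assumes "z ^ 5 = 1" "z \<noteq> 1" "i mod 5 \<in> {2,3,4}"
  shows "Theta M (z^2) $ i = 0"
proof -
  define R where "R = {-int M..int M+1}"
  define S where "S = {j \<in> R. tj j = i}"
  define f where "f j = (- (z^2)) powi j" for j
  have z0: "z \<noteq> 0" using assms(1) by auto
  have "Theta M (z^2) $ i = (\<Sum>j\<in>S. f j)"
    unfolding Theta_nth S_def f_def R_def by (rule sum.inter_filter[symmetric]) simp
  also have "(\<Sum>j\<in>S. f j) = 0"
  proof -
    have fS: "finite S" unfolding S_def R_def by (rule finite_subset[of _ "{-int M..int M+1}"]) auto
    have tj_sym: "tj (1 - j) = tj j" for j
      unfolding tj_def by (simp add: algebra_simps)
    have mapS: "(\<lambda>j. 1 - j) ` S \<subseteq> S" by (auto simp: S_def R_def tj_sym)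
    have bij: "bij_betw (\<lambda>j. 1 - j) S S"
      by (rule bij_betw_byWitness[where f'="\<lambda>j. 1 - j"]) (use mapS in auto)
    have neg: "f (1 - j) = - f j" if "j \<in> S" for j
    proof -
      have "tj j = i" using that by (simp add: S_def)
      then have j3: "j mod 5 = 3" using tj_mod assms(3) by blast
      have "(z^2) powi (1 - j) = (z^2) powi j * (z^2) powi (1 - 2*j)"
        using z0 by (simp flip: power_int_add)
      also have "(z^2) powi (1 - 2*j) = z powi (2 * (1 - 2*j))"
        by (metis power_int_mult power_int_of_nat of_nat_numeral)
      also have "z powi (2 * (1 - 2*j)) = 1"
      proof (rule powi_5dvd[OF assms(1)])
        have "j = 5 * (j div 5) + 3" using j3 by (metis mod_div_mult_eq mult.commute add.commute)
        then have "2 * (1 - 2*j) = 5 * (-4 * (j div 5) - 2)" by (simp add: algebra_simps)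
        then show "5 dvd (2 * (1 - 2*j))" by (metis dvd_triv_left)
      qed
      finally have e: "(z^2) powi (1 - j) = (z^2) powi j" by simp
      show ?thesis unfolding f_def power_int_minus_left using e by auto
    qed
    have "(\<Sum>j\<in>S. f j) = (\<Sum>j\<in>S. f (1 - j))"
      by (rule sum.reindex_bij_betw[OF bij, symmetric])
    also have "\<dots> = - (\<Sum>j\<in>S. f j)" using neg by (simp add: sum_negf)
    finally show ?thesis by simp
  qed
  finally show ?thesis .
qed


definition Qprod :: "nat \<Rightarrow> complex fps" where
  "Qprod M = (\<Prod>k\<in>{1..M}. 1 - fps_X ^ k)"

definition Jprod :: "nat \<Rightarrow> complex \<Rightarrow> complex fps" where
  "Jprod M z = (\<Prod>k\<in>{1..M}. (1 - fps_X ^ k) * (1 - fps_const (z^2) * fps_X ^ k) * (1 - fps_const (z^3) * fps_X ^ k))"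

lemma PQ: "Phi M 1 * Qprod M = 1"
proof -
  have "Phi M 1 * Qprod M = (\<Prod>k\<in>{1..M}. Geo k 1 * (1 - fps_X ^ k))"
    unfolding Phi_prod Qprod_def by (simp add: prod.distrib)
  also have "\<dots> = (\<Prod>k\<in>{1..M}. 1)"
  proof (intro prod.cong refl)
    fix k assume "k \<in> {1..M}"
    then have "(1 - fps_const 1 * fps_X ^ k) * Geo k 1 = 1" by (intro Geo_inv) auto
    then show "Geo k 1 * (1 - fps_X ^ k) = 1" by (simp add: mult.commute)
  qed
  finally show ?thesis by simp
qed

lemma UQ: "Uprod M x y * Qprod M = fps_const (1 - x) *
   (\<Prod>k\<in>{1..M}. (1 - fps_X ^ k) * (1 - fps_const x * fps_X ^ k) * (1 - fps_const y * fps_X ^ k))"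
proof -
  have e: "{0..M} = insert 0 {1..M}" by auto
  have "(\<Prod>k\<in>{0..M}. 1 - fps_const x * fps_X ^ k) = fps_const (1 - x) * (\<Prod>k\<in>{1..M}. 1 - fps_const x * fps_X ^ k)"
  proof -
    have "(\<Prod>k\<in>insert 0 {1..M}. 1 - fps_const x * fps_X ^ k) = (1 - fps_const x * fps_X ^ 0) * (\<Prod>k\<in>{1..M}. 1 - fps_const x * fps_X ^ k)"
      by (rule prod.insert) auto
    moreover have "fps_const (1 - x) = fps_const 1 - fps_const x" by (simp only: fps_const_sub)
    ultimately show ?thesis unfolding e by simp
  qed
  then show ?thesis unfolding Uprod_def Qprod_def by (simp add: prod.distrib ac_simps)
qed

lemma J_vanish:
  fixes z :: complex
  assumes "z ^ 5 = 1" "z \<noteq> 1" "i \<le> M" "i mod 5 \<in> {2,3,4}"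
  shows "Jprod M z $ i = 0"
proof -
  have xy: "z^2 * z^3 = 1" using assms(1) by (simp flip: power_add)
  have eq: "equpto M (Uprod M (z^2) (z^3)) (Theta M (z^2) * Phi M 1)"
    unfolding equpto_def using JTP_trunc[OF xy] by blast
  have "(Uprod M (z^2) (z^3) * Qprod M) $ i = (Theta M (z^2) * Phi M 1 * Qprod M) $ i"
    using equpto_mult[OF eq] assms(3) unfolding equpto_def by blast
  also have "Theta M (z^2) * Phi M 1 * Qprod M = Theta M (z^2)" by (simp add: mult.assoc PQ)
  finally have "(fps_const (1 - z^2) * Jprod M z) $ i = Theta M (z^2) $ i"
    by (simp add: UQ Jprod_def)
  then have "(1 - z^2) * Jprod M z $ i = 0" using Theta_vanish[OF assms(1,2,4)] by simp
  moreover have "1 - z^2 \<noteq> 0"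
  proof
    assume "1 - z^2 = 0"
    then have z2: "z^2 = 1" by simp
    have "z = z * (z^2)^2" using z2 by simp
    also have "\<dots> = z^5" by (simp flip: power_mult power_Suc)
    finally show False using assms(1,2) by simp
  qed
  ultimately show ?thesis by simp
qed

lemma supp5_mult:
  assumes "\<And>n. \<not> 5 dvd n \<Longrightarrow> A $ n = 0" "\<And>n. \<not> 5 dvd n \<Longrightarrow> B $ n = (0::complex)"
  shows "\<not> 5 dvd n \<Longrightarrow> (A * B) $ n = 0"
proof -
  assume n: "\<not> 5 dvd n"
  have "(A * B) $ n = (\<Sum>t=0..n. A $ t * B $ (n - t))" by (rule fps_mult_nth)
  also have "\<dots> = 0"
  proof (intro sum.neutral ballI)
    fix t assume t: "t \<in> {0..n}"
    show "A $ t * B $ (n - t) = 0"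
    proof (cases "5 dvd t")
      case True
      then have "\<not> 5 dvd (n - t)" using n t by (metis atLeastAtMost_iff dvd_add le_add_diff_inverse)
      then show ?thesis using assms(2) by simp
    qed (simp add: assms(1))
  qed
  finally show ?thesis .
qed

definition Wprod :: "nat \<Rightarrow> complex fps" where
  "Wprod M = (\<Prod>k\<in>{1..M}. Geo (5 * k) 1)"

lemma W_supp: "\<not> 5 dvd n \<Longrightarrow> Wprod M $ n = 0"
proof (induction M arbitrary: n)
  case 0
  then show ?case by (cases n) (simp_all add: Wprod_def)
next
  case (Suc M)
  have e: "{1..Suc M} = insert (Suc M) {1..M}" by auto
  have "Wprod (Suc M) = Wprod M * Geo (5 * Suc M) 1" by (simp add: Wprod_def e mult.commute)
  moreover have "\<And>n. \<not> 5 dvd n \<Longrightarrow> Geo (5 * Suc M) 1 $ n = 0"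
    by (auto simp: Geo_def dest: dvd_mult_left)
  ultimately show ?case using supp5_mult[of "Wprod M" "Geo (5 * Suc M) 1" n] Suc by simp
qed

lemma H_vanish:
  fixes z :: complex
  assumes "z ^ 5 = 1" "z \<noteq> 1" "i \<le> M" "i mod 5 \<in> {2,3,4}"
  shows "(\<Prod>k\<in>{1..M}. Geo k z * Geo k (z^4)) $ i = 0"
proof -
  define H where "H = (\<Prod>k\<in>{1..M}. Geo k z * Geo k (z^4))"
  define E where "E = (\<Prod>k\<in>{1..M}. (1 - fps_const z * fps_X ^ k) * (1 - fps_const (z^4) * fps_X ^ k))"
  have HE: "H * E = 1"
  proof -
    have "H * E = (\<Prod>k\<in>{1..M}. ((1 - fps_const z * fps_X ^ k) * Geo k z) * ((1 - fps_const (z^4) * fps_X ^ k) * Geo k (z^4)))"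
      unfolding H_def E_def by (simp add: prod.distrib[symmetric] ac_simps)
    also have "\<dots> = (\<Prod>k\<in>{1..M}. 1)" by (intro prod.cong refl) (simp add: Geo_inv)
    finally show ?thesis by simp
  qed
  have s: "1 + fps_const z + fps_const z ^ 2 + fps_const z ^ 3 + fps_const z ^ 4 = (0 :: complex fps)"
  proof -
    have "1 + fps_const z + fps_const z ^ 2 + fps_const z ^ 3 + fps_const z ^ 4 = fps_const (1 + z + z^2 + z^3 + z^4)"
      by (simp only: fps_const_add[symmetric] fps_const_power[symmetric] fps_const_1_eq_1[symmetric])
    then show ?thesis using root5_sum[OF assms(1,2)] by simp
  qed
  have EJW: "E * Jprod M z * Wprod M = 1"
  proof -
    have "E * Jprod M z * Wprod M = (\<Prod>k\<in>{1..M}. ((1 - fps_X ^ k) * (1 - fps_const z * fps_X ^ k) *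
        (1 - fps_const z ^ 2 * fps_X ^ k) * (1 - fps_const z ^ 3 * fps_X ^ k) * (1 - fps_const z ^ 4 * fps_X ^ k)) * Geo (5 * k) 1)"
      unfolding E_def Jprod_def Wprod_def by (simp add: prod.distrib[symmetric] fps_const_power ac_simps)
    also have "\<dots> = (\<Prod>k\<in>{1..M}. (1 - fps_const 1 * fps_X ^ (5 * k)) * Geo (5 * k) 1)"
    proof (intro prod.cong refl)
      fix k
      have "(1 - fps_X ^ k) * (1 - fps_const z * fps_X ^ k) * (1 - fps_const z ^ 2 * fps_X ^ k) *
          (1 - fps_const z ^ 3 * fps_X ^ k) * (1 - fps_const z ^ 4 * fps_X ^ k) = 1 - (fps_X ^ k) ^ 5"
        by (rule fifth_root_prod[OF s])
      also have "(fps_X ^ k) ^ 5 = (fps_X ^ (5 * k) :: complex fps)" by (simp add: power_mult mult.commute)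
      finally show "(1 - fps_X ^ k) * (1 - fps_const z * fps_X ^ k) * (1 - fps_const z ^ 2 * fps_X ^ k) *
          (1 - fps_const z ^ 3 * fps_X ^ k) * (1 - fps_const z ^ 4 * fps_X ^ k) * Geo (5 * k) 1
          = (1 - fps_const 1 * fps_X ^ (5 * k)) * Geo (5 * k) 1" by simp
    qed
    also have "\<dots> = (\<Prod>k\<in>{1..M}. 1)" by (intro prod.cong refl Geo_inv) auto
    finally show ?thesis by simp
  qed
  have "H = H * (E * Jprod M z * Wprod M)" using EJW by simp
  also have "\<dots> = (H * E) * (Jprod M z * Wprod M)" by (simp only: ac_simps)
  finally have HJW: "H = Jprod M z * Wprod M" using HE by simp
  have "(Jprod M z * Wprod M) $ i = (\<Sum>t=0..i. Jprod M z $ t * Wprod M $ (i - t))" by (rule fps_mult_nth)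
  also have "\<dots> = 0"
  proof (intro sum.neutral ballI)
    fix t assume t: "t \<in> {0..i}"
    show "Jprod M z $ t * Wprod M $ (i - t) = 0"
    proof (cases "5 dvd (i - t)")
      case True
      then obtain q where q: "i - t = 5 * q" by auto
      then have "i = t + 5 * q" using t by auto
      then have "t mod 5 = i mod 5" by simp
      then have "Jprod M z $ t = 0" using J_vanish[OF assms(1,2), of t M] t assms(3,4) by simp
      then show ?thesis by simp
    qed (simp add: W_supp)
  qed
  finally show ?thesis using HJW H_def by simp
qed


lemma qnu_formula:
  fixes A :: "nat set" and K :: nat
  assumes fA: "finite A"
  defines "T \<equiv> (\<lambda>b. int b - int K) ` A \<union> {k. k < - int K}"
  shows "card {g. g \<notin> T \<and> card {s \<in> T. s > g} > 0} = gbm A"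
proof -
  have G: "{g. g \<notin> T \<and> card {s \<in> T. s > g} > 0} =
      (if A = {} then {} else (\<lambda>b. int b - int K) ` {b. b < Max A \<and> b \<notin> A})"
  proof (intro set_eqI iffI)
    fix g assume g: "g \<in> {g. g \<notin> T \<and> card {s \<in> T. s > g} > 0}"
    then have gT: "g \<notin> T" and c: "card {s \<in> T. s > g} > 0" by auto
    have gK: "g \<ge> - int K" using gT by (auto simp: T_def)
    obtain s where s: "s \<in> T" "s > g" using c by (metis (no_types, lifting) card.empty empty_Collect_eq less_irrefl)
    then obtain a where a: "a \<in> A" "s = int a - int K" using gK by (auto simp: T_def)
    then have ne: "A \<noteq> {}" by auto
    have "a \<le> Max A" using a fA by simp
    then have lt: "g < int (Max A) - int K" using s a by linarith
    define b where "b = nat (g + int K)"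
    have gb: "g = int b - int K" using gK by (simp add: b_def)
    have "b \<notin> A" using gT gb by (auto simp: T_def)
    moreover have "b < Max A" using lt gb by linarith
    ultimately show "g \<in> (if A = {} then {} else (\<lambda>b. int b - int K) ` {b. b < Max A \<and> b \<notin> A})"
      using ne gb by auto
  next
    fix g assume g: "g \<in> (if A = {} then {} else (\<lambda>b. int b - int K) ` {b. b < Max A \<and> b \<notin> A})"
    then have ne: "A \<noteq> {}" by (auto split: if_splits)
    then obtain b where b: "b < Max A" "b \<notin> A" "g = int b - int K" using g by auto
    have gT: "g \<notin> T" using b by (auto simp: T_def inj_on_def)
    have "{s \<in> T. s > g} \<subseteq> (\<lambda>b. int b - int K) ` A" using b by (auto simp: T_def)
    then have fin: "finite {s \<in> T. s > g}" using fA finite_subset by blast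
    have "int (Max A) - int K \<in> {s \<in> T. s > g}" using b ne fA by (auto simp: T_def)
    then have "card {s \<in> T. s > g} > 0" using fin card_gt_0_iff by blast
    then show "g \<in> {g. g \<notin> T \<and> card {s \<in> T. s > g} > 0}" using gT by simp
  qed
  show ?thesis
  proof (cases "A = {}")
    case True
    then have "{g. g \<notin> T \<and> card {s \<in> T. s > g} > 0} = {}" using G by simp
    then show ?thesis using True by (simp only: card.empty gbm_def) simp
  next
    case False
    have inj: "inj_on (\<lambda>b. int b - int K) {b. b < Max A \<and> b \<notin> A}" by (auto simp: inj_on_def)
    have mx: "\<And>x. x \<in> A \<Longrightarrow> x \<le> Max A" using fA by simp
    have sub: "A - {Max A} \<subseteq> {0..<Max A}"
    proof
      fix x assume "x \<in> A - {Max A}"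
      then show "x \<in> {0..<Max A}" using mx[of x] by auto
    qed
    have e: "{b. b < Max A \<and> b \<notin> A} = {0..<Max A} - (A - {Max A})"
      using sub by auto
    have "A - {Max A} \<subseteq> {0..<Max A}" by (rule sub)
    then have "card ({0..<Max A} - (A - {Max A})) = Max A - (card A - 1)"
      using fA False by (simp add: card_Diff_subset finite_subset)
    moreover have "card A \<le> Suc (Max A)" by (rule card_le_Max_Suc[OF fA False])
    moreover have "card A \<ge> 1" using fA False by (simp add: Suc_leI card_gt_0_iff)
    ultimately have "card {b. b < Max A \<and> b \<notin> A} = Max A + 1 - card A" using e by simp
    then show ?thesis using G False by (simp add: card_image[OF inj] gbm_def)
  qed
qed


definition padL :: "nat \<Rightarrow> nat list \<Rightarrow> nat list" where
  "padL L xs = xs @ replicate (L - length xs) 0"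

definition slist :: "nat \<Rightarrow> nat list \<Rightarrow> nat list" where
  "slist L xs = map (\<lambda>i. padL L xs ! i + (L - 1 - i)) [0..<L]"

definition enc :: "nat \<Rightarrow> nat list \<Rightarrow> nat set" where
  "enc L xs = set (slist L xs)"

lemma sorted_set_id: "sorted_wrt (<) ys \<Longrightarrow> sorted_list_of_set (set ys) = (ys :: nat list)"
  by (simp add: sorted_list_of_set_sort_remdups strict_sorted_iff distinct_remdups_id sorted_sort_id)

lemma part_length_le: "xs \<in> partitions N \<Longrightarrow> length xs \<le> N"
proof -
  assume xs: "xs \<in> partitions N"
  then have "0 \<notin> set xs" "sum_list xs = N" by (auto simp: partitions_def)
  then show ?thesis
  proof (induction xs arbitrary: N)
    case (Cons x xs) then show ?case by fastforce
  qed simp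
qed

lemma length_padL: "length xs \<le> L \<Longrightarrow> length (padL L xs) = L"
  by (simp add: padL_def)

lemma padL_nth: "length xs \<le> L \<Longrightarrow> i < L \<Longrightarrow> padL L xs ! i = part_at xs (Suc i)"
  by (auto simp: padL_def part_at_def nth_append)

lemma sorted_rep0: "sorted_wrt (\<ge>) (replicate n (0::nat))"
  by (induction n) auto

lemma padL_sorted: "sorted_wrt (\<ge>) xs \<Longrightarrow> sorted_wrt (\<ge>) (padL L xs)"
  by (auto simp: padL_def sorted_wrt_append sorted_rep0)

lemma slist_sorted:
  assumes "sorted_wrt (\<ge>) xs" "length xs \<le> L"
  shows "sorted_wrt (>) (slist L xs)"
proof -
  have p: "sorted_wrt (\<ge>) (padL L xs)" by (rule padL_sorted[OF assms(1)])
  show ?thesis unfolding sorted_wrt_iff_nth_less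
  proof (intro allI impI)
    fix i j assume ij: "i < j" "j < length (slist L xs)"
    then have jL: "j < L" by (simp add: slist_def)
    have "padL L xs ! j \<le> padL L xs ! i"
      using p ij jL length_padL[OF assms(2)] unfolding sorted_wrt_iff_nth_less by auto
    then show "slist L xs ! i > slist L xs ! j" using ij jL by (simp add: slist_def)
  qed
qed

lemma filter_padL: "0 \<notin> set xs \<Longrightarrow> filter (\<lambda>x. 0 < x) (padL L xs) = xs"
proof -
  assume "0 \<notin> set xs"
  then have "filter (\<lambda>x. 0 < x) xs = xs" by (induction xs) auto
  then show ?thesis by (simp add: padL_def)
qed

lemma sum_list_padL: "sum_list (padL L xs) = sum_list xs"
  by (simp add: padL_def)

lemma sum_upt_tri: "(\<Sum>i<L. L - 1 - i) = tri L"
proof (induction L)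
  case 0 then show ?case by simp
next
  case (Suc L)
  have "(\<Sum>i<Suc L. Suc L - 1 - i) = (\<Sum>i<L. Suc L - 1 - i) + (Suc L - 1 - L)"
    by (rule sum.lessThan_Suc)
  also have "(\<Sum>i<L. Suc L - 1 - i) = (\<Sum>i<L. Suc (L - 1 - i))" by (rule sum.cong) auto
  also have "\<dots> = (\<Sum>i<L. L - 1 - i) + L"
    by (simp only: plus_1_eq_Suc[symmetric] sum.distrib) simp
  finally show ?case using Suc by (simp add: tri_Suc)
qed

lemma enc_in_sets_of:
  assumes xs: "xs \<in> partitions N" and NL: "N \<le> L"
  shows "enc L xs \<in> sets_of L N"
proof -
  have s: "sorted_wrt (\<ge>) xs" and z: "0 \<notin> set xs" and sm: "sum_list xs = N"
    using xs by (auto simp: partitions_def)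
  have lL: "length xs \<le> L" using part_length_le[OF xs] NL by simp
  have ss: "sorted_wrt (>) (slist L xs)" by (rule slist_sorted[OF s lL])
  have dist: "distinct (slist L xs)" using ss by (metis sorted_wrt_rev strict_sorted_iff distinct_rev)
  have "card (enc L xs) = length (slist L xs)" unfolding enc_def by (rule distinct_card[OF dist])
  then have "card (enc L xs) = L" by (simp add: slist_def)
  moreover have "\<Sum>(enc L xs) = N + tri L"
  proof -
    have "\<Sum>(enc L xs) = sum_list (slist L xs)" using dist by (simp add: enc_def distinct_sum_list_conv_Sum)
    also have "\<dots> = (\<Sum>i<L. padL L xs ! i + (L - 1 - i))"
      by (simp add: slist_def sum_list_sum_nth atLeast0LessThan)
    also have "\<dots> = (\<Sum>i<L. padL L xs ! i) + (\<Sum>i<L. L - 1 - i)" by (rule sum.distrib)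
    also have "\<dots> = (\<Sum>i<L. padL L xs ! i) + tri L" by (simp only: sum_upt_tri)
    also have "(\<Sum>i<L. padL L xs ! i) = sum_list (padL L xs)"
      using length_padL[OF lL] by (simp add: sum_list_sum_nth atLeast0LessThan)
    finally show ?thesis using sm by (simp add: sum_list_padL)
  qed
  ultimately show ?thesis by (simp add: sets_of_def enc_def)
qed

lemma enc_inj:
  assumes xs: "xs \<in> partitions N" and ys: "ys \<in> partitions N" and NL: "N \<le> L"
    and e: "enc L xs = enc L ys"
  shows "xs = ys"
proof -
  have lx: "length xs \<le> L" using part_length_le[OF xs] NL by simp
  have ly: "length ys \<le> L" using part_length_le[OF ys] NL by simp
  have sx: "sorted_wrt (>) (slist L xs)" using slist_sorted[OF _ lx] xs by (simp add: partitions_def)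
  have sy: "sorted_wrt (>) (slist L ys)" using slist_sorted[OF _ ly] ys by (simp add: partitions_def)
  have rx: "sorted_wrt (<) (rev (slist L xs))" using sx by (simp add: sorted_wrt_rev)
  have ry: "sorted_wrt (<) (rev (slist L ys))" using sy by (simp add: sorted_wrt_rev)
  have "rev (slist L xs) = sorted_list_of_set (set (rev (slist L xs)))" by (rule sorted_set_id[OF rx, symmetric])
  also have "\<dots> = sorted_list_of_set (enc L xs)" by (simp add: enc_def)
  also have "\<dots> = sorted_list_of_set (set (rev (slist L ys)))" using e by (simp add: enc_def)
  also have "\<dots> = rev (slist L ys)" by (rule sorted_set_id[OF ry])
  finally have sl: "slist L xs = slist L ys" by simp
  have "padL L xs = padL L ys"
  proof (rule nth_equalityI)
    show "length (padL L xs) = length (padL L ys)" using lx ly by (simp add: length_padL)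
    fix i assume "i < length (padL L xs)"
    then have i: "i < L" using lx by (simp add: length_padL)
    have "slist L xs ! i = slist L ys ! i" using sl by simp
    then show "padL L xs ! i = padL L ys ! i" using i by (simp add: slist_def)
  qed
  moreover have "0 \<notin> set xs" "0 \<notin> set ys" using xs ys by (auto simp: partitions_def)
  ultimately show ?thesis using filter_padL[of xs L] filter_padL[of ys L] by metis
qed


lemma strict_dec_gap:
  assumes "sorted_wrt (>) zs" "i \<le> j" "j < length zs"
  shows "zs ! j + (j - i) \<le> (zs ! i :: nat)"
  using assms(2,3)
proof (induction j rule: dec_induct)
  case base then show ?case by simp
next
  case (step j)
  have "zs ! Suc j < zs ! j" using assms(1) step.prems unfolding sorted_wrt_iff_nth_less by auto
  then show ?case using step by simp
qed

lemma dec_filter: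
  "sorted_wrt (\<ge>) ys \<Longrightarrow> filter (\<lambda>x. 0 < x) ys @ replicate (length ys - length (filter (\<lambda>x. 0 < x) ys)) 0 = (ys :: nat list)"
proof (induction ys)
  case (Cons y ys)
  show ?case
  proof (cases "y = 0")
    case True
    then have "\<forall>z\<in>set ys. z = 0" using Cons.prems by auto
    then have r: "replicate (length ys) 0 = ys" by (simp add: replicate_length_same)
    have f: "filter (\<lambda>x. 0 < x) ys = []" using \<open>\<forall>z\<in>set ys. z = 0\<close> by (simp add: filter_empty_conv)
    show ?thesis using True f r by simp
  next
    case False
    then show ?thesis using Cons by (simp add: Suc_diff_le length_filter_le)
  qed
qed simp

lemma enc_surj:
  assumes B: "B \<in> sets_of L N"
  shows "\<exists>xs \<in> partitions N. enc L xs = B"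
proof -
  have fB: "finite B" and cB: "card B = L" and sB: "\<Sum>B = N + tri L" using B by (auto simp: sets_of_def)
  define s where "s = sorted_list_of_set B"
  define sl where "sl = rev s"
  have ls: "length s = L" using cB by (simp add: s_def)
  have lsl: "length sl = L" using ls by (simp add: sl_def)
  have ss: "sorted_wrt (<) s" by (simp add: s_def strict_sorted_list_of_set)
  have ssl: "sorted_wrt (>) sl" using ss by (simp add: sl_def sorted_wrt_rev)
  have setsl: "set sl = B" using fB by (simp add: sl_def s_def)
  have ge: "L - 1 - i \<le> sl ! i" if "i < L" for i
  proof -
    have "sl ! i = s ! (L - 1 - i)" using that ls by (simp add: sl_def rev_nth)
    moreover have "L - 1 - i \<le> s ! (L - 1 - i)" using sorted_wrt_less_idx[OF ss, of "L - 1 - i"] ls that by simp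
    ultimately show ?thesis by simp
  qed
  define pad' where "pad' = map (\<lambda>i. sl ! i - (L - 1 - i)) [0..<L]"
  have lp: "length pad' = L" by (simp add: pad'_def)
  have sp: "sorted_wrt (\<ge>) pad'"
    unfolding sorted_wrt_iff_nth_less
  proof (intro allI impI)
    fix i j assume ij: "i < j" "j < length pad'"
    then have jL: "j < L" using lp by simp
    have "sl ! j + (j - i) \<le> sl ! i" using strict_dec_gap[OF ssl, of i j] ij jL lsl by simp
    then show "pad' ! j \<le> pad' ! i" using ij jL ge[of i] ge[of j] by (simp add: pad'_def)
  qed
  define xs where "xs = filter (\<lambda>x. 0 < x) pad'"
  have lxs: "length xs \<le> L" using lp by (simp add: xs_def length_filter_le[of _ pad', unfolded lp])
  have padeq: "padL L xs = pad'"
    using dec_filter[OF sp] lp by (simp add: padL_def xs_def)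
  have "slist L xs = sl"
  proof (rule nth_equalityI)
    show "length (slist L xs) = length sl" using lsl by (simp add: slist_def)
    fix i assume "i < length (slist L xs)"
    then have i: "i < L" by (simp add: slist_def)
    show "slist L xs ! i = sl ! i" using i ge[OF i] by (simp add: slist_def padeq pad'_def)
  qed
  then have encB: "enc L xs = B" using setsl by (simp add: enc_def)
  have "sorted_wrt (\<ge>) xs" using sp by (simp add: xs_def sorted_wrt_filter)
  moreover have "0 \<notin> set xs" by (simp add: xs_def)
  moreover have "sum_list xs = N"
  proof -
    have "sum_list xs = sum_list pad'" by (metis padeq sum_list_padL)
    also have "\<dots> = (\<Sum>i<L. sl ! i - (L - 1 - i))" by (simp add: pad'_def sum_list_sum_nth atLeast0LessThan)
    finally have e1: "sum_list xs = (\<Sum>i<L. sl ! i - (L - 1 - i))" .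
    have "(\<Sum>i<L. sl ! i) = (\<Sum>i<L. (sl ! i - (L - 1 - i)) + (L - 1 - i))"
    proof (intro sum.cong refl)
      fix i assume "i \<in> {..<L}"
      then have "L - 1 - i \<le> sl ! i" using ge by simp
      then show "sl ! i = sl ! i - (L - 1 - i) + (L - 1 - i)" by simp
    qed
    also have "\<dots> = (\<Sum>i<L. sl ! i - (L - 1 - i)) + tri L" by (simp only: sum.distrib sum_upt_tri)
    finally have e2: "(\<Sum>i<L. sl ! i) = sum_list xs + tri L" using e1 by simp
    have "(\<Sum>i<L. sl ! i) = sum_list sl" using lsl by (simp add: sum_list_sum_nth atLeast0LessThan)
    also have "\<dots> = \<Sum>B"
    proof -
      have "distinct s" using ss by (simp add: strict_sorted_iff)
      then have "distinct sl" by (simp add: sl_def)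
      then show ?thesis using setsl by (metis distinct_sum_list_conv_Sum)
    qed
    finally show ?thesis using e2 sB by simp
  qed
  ultimately show ?thesis using encB by (auto simp: partitions_def)
qed

lemma enc_bij:
  assumes "N \<le> L"
  shows "bij_betw (enc L) (partitions N) (sets_of L N)"
  unfolding bij_betw_def
proof
  show "inj_on (enc L) (partitions N)" using enc_inj assms by (meson inj_onI)
  show "enc L ` partitions N = sets_of L N"
    using enc_in_sets_of[OF _ assms] enc_surj by blast
qed


lemma enc_image:
  assumes "length xs \<le> L"
  shows "enc L xs = (\<lambda>i. part_at xs i + L - i) ` {1..L}"
proof -
  have "enc L xs = (\<lambda>i. padL L xs ! i + (L - 1 - i)) ` {0..<L}" by (simp add: enc_def slist_def)
  also have "\<dots> = (\<lambda>i. part_at xs (Suc i) + L - Suc i) ` {0..<L}"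
    using assms by (intro image_cong refl) (simp add: padL_nth)
  also have "\<dots> = (\<lambda>i. part_at xs i + L - i) ` (Suc ` {0..<L})" by (simp only: image_image)
  also have "Suc ` {0..<L} = {1..L}" by (simp add: image_Suc_atLeastLessThan atLeastLessThanSuc_atLeastAtMost)
  finally show ?thesis .
qed

lemma part_at_big: "length xs \<le> L \<Longrightarrow> L < j \<Longrightarrow> part_at xs j = 0"
  by (simp add: part_at_def)

lemma beta_set_enc:
  assumes "length xs \<le> L"
  shows "beta_set xs = (\<lambda>b. int b - int L) ` enc L xs \<union> {x. x < - int L}"
proof (intro set_eqI iffI)
  fix x assume "x \<in> beta_set xs"
  then obtain j where j: "j \<ge> 1" "x = int (part_at xs j) - int j" by (auto simp: beta_set_def)
  show "x \<in> (\<lambda>b. int b - int L) ` enc L xs \<union> {x. x < - int L}"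
  proof (cases "j \<le> L")
    case True
    then have "part_at xs j + L - j \<in> enc L xs" using j assms by (auto simp: enc_image)
    moreover have "x = int (part_at xs j + L - j) - int L" using j True by simp
    ultimately show ?thesis by blast
  next
    case False
    then show ?thesis using j part_at_big[OF assms, of j] by simp
  qed
next
  fix x assume x: "x \<in> (\<lambda>b. int b - int L) ` enc L xs \<union> {x. x < - int L}"
  show "x \<in> beta_set xs"
  proof (cases "x < - int L")
    case True
    define j where "j = nat (- x)"
    have jL: "L < j" "1 \<le> j" using True by (auto simp: j_def)
    have "x = int (part_at xs j) - int j" using part_at_big[OF assms jL(1)] True by (simp add: j_def)
    then show ?thesis using jL unfolding beta_set_def by blast
  next
    case False
    then obtain i where i: "i \<in> {1..L}" "x = int (part_at xs i + L - i) - int L"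
      using x assms by (auto simp: enc_image)
    then have "x = int (part_at xs i) - int i" by auto
    then show ?thesis using i unfolding beta_set_def by auto
  qed
qed

definition evod :: "nat \<Rightarrow> nat set \<Rightarrow> nat set" where
  "evod c E = {b. 2 * b + c \<in> E}"

lemma beta_sub_enc:
  assumes "length xs \<le> 2 * K" "c \<le> 1"
  shows "beta_sub 2 c xs = (\<lambda>b. int b - int K) ` evod c (enc (2*K) xs) \<union> {k. k < - int K}"
proof (intro set_eqI iffI)
  fix k assume "k \<in> beta_sub 2 c xs"
  then have k: "2 * k + int c \<in> beta_set xs" by (simp add: beta_sub_def)
  show "k \<in> (\<lambda>b. int b - int K) ` evod c (enc (2*K) xs) \<union> {k. k < - int K}"
  proof (cases "k < - int K")
    case False
    then have "2 * k + int c \<ge> - int (2*K)" by simp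
    moreover have "2 * k + int c \<in> (\<lambda>b. int b - int (2*K)) ` enc (2*K) xs \<union> {x. x < - int (2*K)}"
      using k beta_set_enc[OF assms(1)] by simp
    ultimately have "2 * k + int c \<in> (\<lambda>b. int b - int (2*K)) ` enc (2*K) xs" by auto
    then obtain b where b: "b \<in> enc (2*K) xs" "2 * k + int c = int b - int (2*K)" by blast
    define b' where "b' = nat (k + int K)"
    have kb: "k = int b' - int K" using False by (simp add: b'_def)
    have "2 * b' + c = b" using b kb by linarith
    then have "b' \<in> evod c (enc (2*K) xs)" using b by (simp add: evod_def)
    then show ?thesis using kb by blast
  qed simp
next
  fix k assume k: "k \<in> (\<lambda>b. int b - int K) ` evod c (enc (2*K) xs) \<union> {k. k < - int K}"
  show "k \<in> beta_sub 2 c xs"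
  proof (cases "k < - int K")
    case True
    then have "2 * k + int c < - int (2*K)" using assms(2) by simp
    then show ?thesis by (simp add: beta_sub_def beta_set_enc[OF assms(1)])
  next
    case False
    then obtain b where b: "2 * b + c \<in> enc (2*K) xs" "k = int b - int K" using k by (auto simp: evod_def)
    have "2 * k + int c = int (2 * b + c) - int (2*K)" using b by simp
    then have "2 * k + int c \<in> (\<lambda>b. int b - int (2*K)) ` enc (2*K) xs"
      using b(1) by (rule image_eqI)
    then have "2 * k + int c \<in> beta_set xs" unfolding beta_set_enc[OF assms(1)] by blast
    then show ?thesis by (simp add: beta_sub_def)
  qed
qed

lemma finite_enc: "finite (enc L xs)" by (simp add: enc_def)

lemma finite_evod: "finite E \<Longrightarrow> finite (evod c E)"
proof -
  assume f: "finite E"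
  have "evod c E \<subseteq> (\<lambda>x. (x - c) div 2) ` E"
  proof
    fix b assume "b \<in> evod c E"
    then have "2 * b + c \<in> E" by (simp add: evod_def)
    moreover have "b = (2 * b + c - c) div 2" by simp
    ultimately show "b \<in> (\<lambda>x. (x - c) div 2) ` E" by blast
  qed
  then show ?thesis using f finite_subset by blast
qed

lemma quotient_nu_enc:
  assumes "length xs \<le> 2 * K" "c \<le> 1"
  shows "quotient_nu 2 c xs = gbm (evod c (enc (2*K) xs))"
  unfolding quotient_nu_def beta_sub_enc[OF assms]
  by (rule qnu_formula[OF finite_evod[OF finite_enc]])

lemma tqr_enc:
  assumes "length xs \<le> 2 * K"
  shows "two_quotient_rank xs = int (gbm (evod 0 (enc (2*K) xs))) - int (gbm (evod 1 (enc (2*K) xs)))"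
  unfolding two_quotient_rank_def using quotient_nu_enc[OF assms] by simp


definition cnt :: "nat list \<Rightarrow> nat \<Rightarrow> nat" where
  "cnt xs j = length (filter (\<lambda>x. j < x) xs)"

definition hd0 :: "nat list \<Rightarrow> nat" where
  "hd0 xs = (if xs = [] then 0 else hd xs)"

definition alt :: "nat list \<Rightarrow> int" where
  "alt xs = (\<Sum>k<length xs. (-1)^k * int (xs ! k))"

lemma num_odd_conj: "num_odd (conjugate xs) = card {j. j < hd0 xs \<and> odd (cnt xs j)}"
proof -
  have c: "conjugate xs = map (cnt xs) [0..<hd0 xs]"
    by (simp add: conjugate_def cnt_def hd0_def)
  show ?thesis unfolding num_odd_def c length_filter_conv_card
    by (intro arg_cong[where f=card] Collect_cong) auto
qed

lemma alt_Cons: "alt (x # ys) = int x - alt ys"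
proof -
  have "alt (x # ys) = (\<Sum>k<Suc (length ys). (-1)^k * int ((x # ys) ! k))" by (simp add: alt_def)
  also have "\<dots> = int x + (\<Sum>k<length ys. (-1)^(Suc k) * int (ys ! k))"
    by (subst sum.lessThan_Suc_shift) simp
  also have "\<dots> = int x - alt ys" by (simp add: alt_def sum_negf)
  finally show ?thesis .
qed

lemma conj_alt:
  assumes "sorted_wrt (\<ge>) xs"
  shows "int (card {j. j < hd0 xs \<and> odd (cnt xs j)}) = alt xs"
  using assms
proof (induction xs)
  case Nil then show ?case by (simp add: hd0_def alt_def)
next
  case (Cons x ys)
  have sy: "sorted_wrt (\<ge>) ys" and xy: "\<forall>y\<in>set ys. y \<le> x" using Cons.prems by auto
  have hy: "hd0 ys \<le> x" using xy by (cases ys) (auto simp: hd0_def)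
  have bound: "\<forall>y\<in>set ys. y \<le> hd0 ys" using sy by (cases ys) (auto simp: hd0_def)
  have cnt0: "cnt ys j = 0" if "hd0 ys \<le> j" for j
    using bound that by (auto simp: cnt_def filter_empty_conv)
  have cS: "cnt (x # ys) j = Suc (cnt ys j)" if "j < x" for j using that by (simp add: cnt_def)
  have e1: "{j. j < hd0 (x # ys) \<and> odd (cnt (x # ys) j)} = {..<x} - {j. j < x \<and> odd (cnt ys j)}"
    by (auto simp: hd0_def cS)
  have e2: "{j. j < x \<and> odd (cnt ys j)} = {j. j < hd0 ys \<and> odd (cnt ys j)}"
    using hy cnt0 by (auto simp: not_less) (metis odd_pos leI not_less0)
  have sub: "{j. j < hd0 ys \<and> odd (cnt ys j)} \<subseteq> {..<x}" using hy by auto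
  have "card {j. j < hd0 (x # ys) \<and> odd (cnt (x # ys) j)} = x - card {j. j < hd0 ys \<and> odd (cnt ys j)}"
    unfolding e1 e2 using sub by (simp add: card_Diff_subset finite_subset)
  moreover have "card {j. j < hd0 ys \<and> odd (cnt ys j)} \<le> x"
    using card_mono[OF _ sub] by simp
  ultimately show ?case using Cons.IH[OF sy] by (simp add: alt_Cons)
qed

lemma num_odd_conj_alt: "sorted_wrt (\<ge>) xs \<Longrightarrow> int (num_odd (conjugate xs)) = alt xs"
  using conj_alt num_odd_conj by simp

lemma alt_padL:
  assumes "length xs \<le> L"
  shows "alt xs = (\<Sum>k<L. (-1)^k * int (padL L xs ! k))"
proof -
  have "(\<Sum>k<L. (-1)^k * int (padL L xs ! k)) = (\<Sum>k\<in>{..<length xs}. (-1)^k * int (padL L xs ! k))"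
  proof (rule sum.mono_neutral_right)
    show "\<forall>k\<in>{..<L} - {..<length xs}. (-1)^k * int (padL L xs ! k) = 0"
      using assms by (auto simp: padL_def nth_append)
  qed (use assms in auto)
  also have "\<dots> = alt xs" by (simp add: alt_def padL_def nth_append)
  finally show ?thesis by simp
qed

lemma num_odd_padL:
  assumes "length xs \<le> L"
  shows "num_odd xs = card {k. k < L \<and> odd (padL L xs ! k)}"
proof -
  have "num_odd xs = length (filter odd (padL L xs))" by (simp add: num_odd_def padL_def)
  then show ?thesis using length_padL[OF assms] by (simp add: length_filter_conv_card)
qed

lemma sum_padL: "length xs \<le> L \<Longrightarrow> sum_list xs = (\<Sum>k<L. padL L xs ! k)"
  using length_padL[of xs L] sum_list_padL[of L xs] by (simp add: sum_list_sum_nth atLeast0LessThan)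


lemma card_int_sum:
  fixes L :: nat
  shows "int (card {k. k < L \<and> P k}) = (\<Sum>k<L. if P k then 1 else 0)"
proof (induction L)
  case (Suc L)
  have "{k. k < Suc L \<and> P k} = (if P L then insert L {k. k < L \<and> P k} else {k. k < L \<and> P k})"
    by (auto simp: less_Suc_eq)
  then show ?case using Suc by simp
qed simp

lemma card_odd_lt: "card {k. k < 2 * K \<and> odd k} = K"
proof (induction K)
  case (Suc K)
  have "{k. k < 2 * Suc K \<and> odd k} = insert (2 * K + 1) {k. k < 2 * K \<and> odd k}"
    by (auto simp: less_Suc_eq)
  then show ?case using Suc by simp
qed simp

lemma card_ev_enc:
  assumes xs: "xs \<in> partitions N" and lL: "length xs \<le> L"
  shows "card (evod 0 (enc L xs)) = card {k. k < L \<and> even (padL L xs ! k + (L - 1 - k))}"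
proof -
  have ss: "sorted_wrt (>) (slist L xs)" using slist_sorted[OF _ lL] xs by (simp add: partitions_def)
  have dist: "distinct (slist L xs)"
  proof -
    have "sorted_wrt (<) (rev (slist L xs))" using ss by (simp add: sorted_wrt_rev)
    then show ?thesis by (simp add: strict_sorted_iff)
  qed
  have inj: "inj_on (\<lambda>b. 2 * b) (evod 0 (enc L xs))" by (auto simp: inj_on_def)
  have img: "(\<lambda>b. 2 * b) ` evod 0 (enc L xs) = {x. even x} \<inter> set (slist L xs)"
    by (auto simp: evod_def enc_def)
  have "card (evod 0 (enc L xs)) = card ({x. even x} \<inter> set (slist L xs))"
    using card_image[OF inj] img by simp
  also have "\<dots> = length (filter even (slist L xs))" by (simp add: distinct_length_filter[OF dist])
  also have "\<dots> = card {k. k < L \<and> even (padL L xs ! k + (L - 1 - k))}"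
    unfolding length_filter_conv_card by (intro arg_cong[where f=card] Collect_cong) (auto simp: slist_def)
  finally show ?thesis .
qed

lemma T_dvd:
  fixes a k L :: nat
  assumes "even L" "k < L"
  shows "(4::int) dvd ((if odd a then 1 else 0) - (-1)^k * int a - int a
           + (if even (a + (L - 1 - k)) then 1 else 0) - (if odd k then 1 else 0))"
proof -
  have par: "even (a + (L - 1 - k)) \<longleftrightarrow> odd (a + k)"
  proof -
    have "L - 1 - k + k + 1 = L" using assms(2) by simp
    then show ?thesis using assms(1) by presburger
  qed
  show ?thesis
  proof (cases "even k")
    case True
    then have m: "(-1::int)^k = 1" by simp
    show ?thesis
    proof (cases "even a")
      case True
      then obtain t where "a = 2 * t" by auto
      then show ?thesis using m par \<open>even k\<close> by auto
    next
      case False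
      then obtain t where "a = 2 * t + 1" using oddE by blast
      then show ?thesis using m par \<open>even k\<close> by auto
    qed
  next
    case False
    then have m: "(-1::int)^k = -1" by simp
    show ?thesis using m par False by auto
  qed
qed

lemma srank_mod:
  assumes xs: "xs \<in> partitions N" and lL: "length xs \<le> 2 * K"
  shows "srank xs mod 4 = (int N - (int (card (evod 0 (enc (2*K) xs))) - int K)) mod 4"
proof -
  define L where "L = 2 * K"
  define a where "a k = padL L xs ! k" for k
  have sx: "sorted_wrt (\<ge>) xs" and sm: "sum_list xs = N" using xs by (auto simp: partitions_def)
  have lL': "length xs \<le> L" using lL by (simp add: L_def)
  have s1: "int (num_odd xs) = (\<Sum>k<L. if odd (a k) then 1 else 0)"
    using num_odd_padL[OF lL'] card_int_sum[of L "\<lambda>k. odd (a k)"] by (simp add: a_def)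
  have s2: "int (num_odd (conjugate xs)) = (\<Sum>k<L. (-1)^k * int (a k))"
    using num_odd_conj_alt[OF sx] alt_padL[OF lL'] by (simp add: a_def)
  have s3: "int N = (\<Sum>k<L. int (a k))"
    using sum_padL[OF lL'] sm by (simp add: a_def)
  have s4: "int (card (evod 0 (enc L xs))) = (\<Sum>k<L. if even (a k + (L - 1 - k)) then 1 else 0)"
    using card_ev_enc[OF xs lL'] card_int_sum[of L "\<lambda>k. even (a k + (L - 1 - k))"] by (simp add: a_def)
  have s5: "int K = (\<Sum>k<L. if odd k then 1 else 0)"
    using card_odd_lt[of K] card_int_sum[of L "\<lambda>k. odd k"] by (simp add: L_def)
  have "srank xs - (int N - (int (card (evod 0 (enc L xs))) - int K)) =
      (\<Sum>k<L. (if odd (a k) then 1 else 0) - (-1)^k * int (a k) - int (a k)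
           + (if even (a k + (L - 1 - k)) then 1 else 0) - (if odd k then 1 else 0))"
    unfolding srank_def s1 s2 s3 s4 s5 by (simp add: sum_subtractf sum.distrib)
  moreover have "(4::int) dvd \<dots>"
  proof (rule dvd_sum)
    fix k assume "k \<in> {..<L}"
    then show "(4::int) dvd ((if odd (a k) then 1 else 0) - (-1)^k * int (a k) - int (a k)
           + (if even (a k + (L - 1 - k)) then 1 else 0) - (if odd k then 1 else 0))"
      by (intro T_dvd) (auto simp: L_def)
  qed
  ultimately have "(4::int) dvd (srank xs - (int N - (int (card (evod 0 (enc L xs))) - int K)))" by simp
  then show ?thesis by (simp add: mod_eq_dvd_iff L_def)
qed


definition merge :: "nat set \<times> nat set \<Rightarrow> nat set" where
  "merge p = (\<lambda>b. 2 * b) ` fst p \<union> (\<lambda>b. 2 * b + 1) ` snd p"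

lemma merge_split: "merge (evod 0 B, evod 1 B) = B"
proof (intro set_eqI iffI)
  fix x assume "x \<in> merge (evod 0 B, evod 1 B)"
  then show "x \<in> B" by (auto simp: merge_def evod_def)
next
  fix x assume x: "x \<in> B"
  show "x \<in> merge (evod 0 B, evod 1 B)"
  proof (cases "even x")
    case True
    then obtain b where "x = 2 * b" by auto
    then show ?thesis using x by (auto simp: merge_def evod_def)
  next
    case False
    then obtain b where "x = 2 * b + 1" using oddE by blast
    then show ?thesis using x by (auto simp: merge_def evod_def)
  qed
qed

lemma split_merge: "evod 0 (merge (B0, B1)) = B0" "evod 1 (merge (B0, B1)) = B1"
  by (auto simp: merge_def evod_def) presburger+

lemma merge_props:
  assumes "finite B0" "finite B1"
  shows "finite (merge (B0, B1))" "card (merge (B0, B1)) = card B0 + card B1"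
    "\<Sum>(merge (B0, B1)) = 2 * \<Sum>B0 + 2 * \<Sum>B1 + card B1"
proof -
  have i0: "inj_on (\<lambda>b. 2 * b) B0" and i1: "inj_on (\<lambda>b. 2 * b + 1) B1" by (auto simp: inj_on_def)
  have d: "(\<lambda>b. 2 * b) ` B0 \<inter> (\<lambda>b. 2 * b + 1) ` B1 = {}" by auto presburger
  show "finite (merge (B0, B1))" using assms by (simp add: merge_def)
  have c1: "card ((\<lambda>b. 2 * b + 1) ` B1) = card B1" by (rule card_image[OF i1])
  have c0: "card ((\<lambda>b. 2 * b) ` B0) = card B0" by (rule card_image[OF i0])
  show "card (merge (B0, B1)) = card B0 + card B1"
    unfolding merge_def fst_conv snd_conv using assms d c0 c1 by (subst card_Un_disjoint) auto
  have "\<Sum>(merge (B0, B1)) = \<Sum>((\<lambda>b. 2 * b) ` B0) + \<Sum>((\<lambda>b. 2 * b + 1) ` B1)"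
    using assms d by (simp add: merge_def sum.union_disjoint)
  also have "\<Sum>((\<lambda>b. 2 * b) ` B0) = (\<Sum>b\<in>B0. 2 * b)" by (simp only: sum.reindex[OF i0] o_def)
  also have "\<Sum>((\<lambda>b. 2 * b + 1) ` B1) = (\<Sum>b\<in>B1. 2 * b + 1)" by (simp only: sum.reindex[OF i1] o_def)
  also have "(\<Sum>b\<in>B0. 2 * b) + (\<Sum>b\<in>B1. 2 * b + 1) = 2 * \<Sum>B0 + 2 * \<Sum>B1 + card B1"
  proof -
    have "(\<Sum>b\<in>B1. 2 * b + 1) = (\<Sum>b\<in>B1. 2 * b) + (\<Sum>b\<in>B1. 1)" by (rule sum.distrib)
    then show ?thesis by (simp add: sum_distrib_left)
  qed
  finally show "\<Sum>(merge (B0, B1)) = 2 * \<Sum>B0 + 2 * \<Sum>B1 + card B1" .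
qed

definition PairSet :: "nat \<Rightarrow> nat \<Rightarrow> nat \<Rightarrow> (nat set \<times> nat set) set" where
  "PairSet L N c = {p. finite (fst p) \<and> finite (snd p) \<and> card (fst p) = c \<and> card (fst p) + card (snd p) = L \<and>
      2 * \<Sum>(fst p) + 2 * \<Sum>(snd p) + card (snd p) = N + tri L}"

lemma bij_split:
  "bij_betw (\<lambda>B. (evod 0 B, evod 1 B)) {B \<in> sets_of L N. card (evod 0 B) = c} (PairSet L N c)"
proof (rule bij_betw_byWitness[where f' = merge])
  show "\<forall>a\<in>{B \<in> sets_of L N. card (evod 0 B) = c}. merge (evod 0 a, evod 1 a) = a"
  proof
    fix a show "merge (evod 0 a, evod 1 a) = a" by (rule merge_split)
  qed
  show "\<forall>a'\<in>PairSet L N c. (evod 0 (merge a'), evod 1 (merge a')) = a'"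
  proof
    fix p :: "nat set \<times> nat set"
    obtain a b where p: "p = (a, b)" by fastforce
    show "(evod 0 (merge p), evod 1 (merge p)) = p" unfolding p by (simp only: split_merge)
  qed
  show "(\<lambda>B. (evod 0 B, evod 1 B)) ` {B \<in> sets_of L N. card (evod 0 B) = c} \<subseteq> PairSet L N c"
  proof
    fix p assume "p \<in> (\<lambda>B. (evod 0 B, evod 1 B)) ` {B \<in> sets_of L N. card (evod 0 B) = c}"
    then obtain B where B: "B \<in> sets_of L N" "card (evod 0 B) = c" "p = (evod 0 B, evod 1 B)" by auto
    have fB: "finite B" and cB: "card B = L" and sB: "\<Sum>B = N + tri L" using B(1) by (auto simp: sets_of_def)
    have f0: "finite (evod 0 B)" and f1: "finite (evod 1 B)" using fB by (simp_all add: finite_evod)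
    note mp = merge_props[OF f0 f1, unfolded merge_split]
    show "p \<in> PairSet L N c" using mp cB sB B(2,3) f0 f1 by (simp add: PairSet_def)
  qed
  show "merge ` PairSet L N c \<subseteq> {B \<in> sets_of L N. card (evod 0 B) = c}"
  proof
    fix B assume "B \<in> merge ` PairSet L N c"
    then obtain B0 B1 where p: "(B0, B1) \<in> PairSet L N c" "B = merge (B0, B1)" by auto
    have f0: "finite B0" and f1: "finite B1" and c0: "card B0 = c" and c1: "card B0 + card B1 = L"
      and s: "2 * \<Sum>B0 + 2 * \<Sum>B1 + card B1 = N + tri L" using p(1) by (auto simp: PairSet_def)
    note mp = merge_props[OF f0 f1]
    show "B \<in> {B \<in> sets_of L N. card (evod 0 B) = c}"
      using mp c0 c1 s p(2) by (simp add: sets_of_def split_merge)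
  qed
qed


lemma conv_sets2:
  fixes P1 P2 :: "complex fps" and f :: "'a \<Rightarrow> nat" and h :: "'b \<Rightarrow> nat" and SA :: "'a set" and SC :: "'b set"
  assumes "finite SA" "finite SC"
    and "\<And>t. t \<le> i \<Longrightarrow> P1 $ t = (\<Sum>A\<in>SA. if f A = t then g A else 0)"
    and "\<And>t. t \<le> i \<Longrightarrow> P2 $ t = (\<Sum>C\<in>SC. if h C = t then k C else 0)"
  shows "(P1 * P2) $ i = (\<Sum>p\<in>SA \<times> SC. if f (fst p) + h (snd p) = i then g (fst p) * k (snd p) else 0)"
proof -
  have "(P1 * P2) $ i = (\<Sum>t=0..i. P1 $ t * P2 $ (i - t))" by (rule fps_mult_nth)
  also have "\<dots> = (\<Sum>t=0..i. \<Sum>A\<in>SA. \<Sum>C\<in>SC. if f A = t \<and> h C = i - t then g A * k C else 0)"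
  proof (intro sum.cong refl)
    fix t assume "t \<in> {0..i}"
    then have "t \<le> i" "i - t \<le> i" by auto
    then show "P1 $ t * P2 $ (i - t) = (\<Sum>A\<in>SA. \<Sum>C\<in>SC. if f A = t \<and> h C = i - t then g A * k C else 0)"
      unfolding assms(3)[OF \<open>t \<le> i\<close>] assms(4)[OF \<open>i - t \<le> i\<close>] sum_product by (intro sum.cong refl) simp
  qed
  also have "\<dots> = (\<Sum>A\<in>SA. \<Sum>C\<in>SC. \<Sum>t=0..i. if f A = t \<and> h C = i - t then g A * k C else 0)"
    by (subst sum.swap, intro sum.cong refl, rule sum.swap)
  also have "\<dots> = (\<Sum>A\<in>SA. \<Sum>C\<in>SC. if f A + h C = i then g A * k C else 0)"
  proof (intro sum.cong refl)
    fix A C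
    have "(\<Sum>t=0..i. if f A = t \<and> h C = i - t then g A * k C else 0)
        = (\<Sum>t=0..i. if t = f A then (if h C = i - f A then g A * k C else 0) else 0)"
      by (intro sum.cong refl) auto
    also have "\<dots> = (if f A + h C = i then g A * k C else 0)"
      by (simp add: sum.delta') auto
    finally show "(\<Sum>t=0..i. if f A = t \<and> h C = i - t then g A * k C else 0)
        = (if f A + h C = i then g A * k C else 0)" .
  qed
  also have "\<dots> = (\<Sum>p\<in>SA \<times> SC. if f (fst p) + h (snd p) = i then g (fst p) * k (snd p) else 0)"
    by (simp add: sum.cartesian_product split_beta)
  finally show ?thesis .
qed

definition SAset :: "nat \<Rightarrow> nat \<Rightarrow> nat set set" where
  "SAset m w = {B. finite B \<and> card B = m \<and> \<Sum>B \<le> w + tri m}"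

lemma SAset_finite: "finite (SAset m w)"
proof -
  have "SAset m w \<subseteq> Pow {0..w + m}"
  proof
    fix B assume B: "B \<in> SAset m w"
    then have f: "finite B" and c: "card B = m" and s: "\<Sum>B \<le> w + tri m" by (auto simp: SAset_def)
    have ge: "tri m \<le> \<Sum>B" using sum_ge_tri[OF f] c by simp
    have "B \<in> sets_of m (\<Sum>B - tri m)" using f c ge by (simp add: sets_of_def)
    then have "B \<subseteq> {0..\<Sum>B - tri m + m}" using sets_of_subset by blast
    then show "B \<in> Pow {0..w + m}" using s by auto
  qed
  then show ?thesis by (rule finite_subset) simp
qed

lemma Phi_SAset:
  assumes "t \<le> w"
  shows "Phi m z $ t = (\<Sum>B\<in>SAset m w. if \<Sum>B - tri m = t then z ^ gbm B else 0)"
proof -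
  have e: "sets_of m t = {B \<in> SAset m w. \<Sum>B - tri m = t}"
  proof (intro set_eqI iffI)
    fix B assume "B \<in> sets_of m t"
    then show "B \<in> {B \<in> SAset m w. \<Sum>B - tri m = t}" using assms by (auto simp: sets_of_def SAset_def)
  next
    fix B assume B: "B \<in> {B \<in> SAset m w. \<Sum>B - tri m = t}"
    then have f: "finite B" and c: "card B = m" by (auto simp: SAset_def)
    have "tri m \<le> \<Sum>B" using sum_ge_tri[OF f] c by simp
    then show "B \<in> sets_of m t" using B f c by (auto simp: sets_of_def SAset_def)
  qed
  show ?thesis unfolding Phi_def fps_nth_Abs_fps e
    by (rule sum.inter_filter[OF SAset_finite])
qed

lemma pair_coeff:
  assumes cL: "c \<le> L" and eq: "2 * w + 2 * tri c + 2 * tri (L - c) + (L - c) = N + tri L"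
  shows "(\<Sum>p\<in>PairSet L N c. z1 ^ gbm (fst p) * z2 ^ gbm (snd p)) = (Phi c z1 * Phi (L - c) z2) $ w"
proof -
  have "(Phi c z1 * Phi (L - c) z2) $ w = (\<Sum>p\<in>SAset c w \<times> SAset (L - c) w.
      if (\<Sum>(fst p) - tri c) + (\<Sum>(snd p) - tri (L - c)) = w then z1 ^ gbm (fst p) * z2 ^ gbm (snd p) else 0)"
    by (rule conv_sets2[OF SAset_finite SAset_finite]) (simp_all add: Phi_SAset)
  also have "\<dots> = (\<Sum>p\<in>{p \<in> SAset c w \<times> SAset (L - c) w. (\<Sum>(fst p) - tri c) + (\<Sum>(snd p) - tri (L - c)) = w}.
      z1 ^ gbm (fst p) * z2 ^ gbm (snd p))"
    by (rule sum.inter_filter[symmetric]) (simp add: SAset_finite)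
  also have "{p \<in> SAset c w \<times> SAset (L - c) w. (\<Sum>(fst p) - tri c) + (\<Sum>(snd p) - tri (L - c)) = w} = PairSet L N c"
  proof (intro set_eqI iffI)
    fix p assume p: "p \<in> {p \<in> SAset c w \<times> SAset (L - c) w. (\<Sum>(fst p) - tri c) + (\<Sum>(snd p) - tri (L - c)) = w}"
    then have f0: "finite (fst p)" and f1: "finite (snd p)" and c0: "card (fst p) = c" and c1: "card (snd p) = L - c"
      and s: "(\<Sum>(fst p) - tri c) + (\<Sum>(snd p) - tri (L - c)) = w" by (auto simp: SAset_def)
    have g0: "tri c \<le> \<Sum>(fst p)" using sum_ge_tri[OF f0] c0 by simp
    have g1: "tri (L - c) \<le> \<Sum>(snd p)" using sum_ge_tri[OF f1] c1 by simp
    show "p \<in> PairSet L N c" using f0 f1 c0 c1 s g0 g1 eq cL by (simp add: PairSet_def)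
  next
    fix p assume p: "p \<in> PairSet L N c"
    then have f0: "finite (fst p)" and f1: "finite (snd p)" and c0: "card (fst p) = c" and c1: "card (fst p) + card (snd p) = L"
      and s: "2 * \<Sum>(fst p) + 2 * \<Sum>(snd p) + card (snd p) = N + tri L" by (auto simp: PairSet_def)
    have c1': "card (snd p) = L - c" using c0 c1 by simp
    have g0: "tri c \<le> \<Sum>(fst p)" using sum_ge_tri[OF f0] c0 by simp
    have g1: "tri (L - c) \<le> \<Sum>(snd p)" using sum_ge_tri[OF f1] c1' by simp
    have "\<Sum>(fst p) + \<Sum>(snd p) = w + tri c + tri (L - c)" using s eq c1' by simp
    then show "p \<in> {p \<in> SAset c w \<times> SAset (L - c) w. (\<Sum>(fst p) - tri c) + (\<Sum>(snd p) - tri (L - c)) = w}"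
      using f0 f1 c0 c1' g0 g1 by (auto simp: SAset_def mem_Times_iff)
  qed
  finally show ?thesis by simp
qed


lemma bip_vanish:
  fixes z :: complex
  assumes "z ^ 5 = 1" "z \<noteq> 1" "w \<le> m0" "w \<le> m1" "w mod 5 \<in> {2,3,4}"
  shows "(Phi m0 z * Phi m1 (z^4)) $ w = 0"
proof -
  have e0: "equpto w (Phi m0 z) (Phi w z)"
    unfolding equpto_def Phi_prod using prod_Geo_trunc1 assms(3) by blast
  have e1: "equpto w (Phi m1 (z^4)) (Phi w (z^4))"
    unfolding equpto_def Phi_prod using prod_Geo_trunc1 assms(4) by blast
  have "(Phi m0 z * Phi m1 (z^4)) $ w = (Phi w z * Phi m1 (z^4)) $ w"
    using equpto_mult[OF e0, of "Phi m1 (z^4)"] by (simp add: equpto_def)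
  also have "\<dots> = (Phi m1 (z^4) * Phi w z) $ w" by (simp add: mult.commute)
  also have "\<dots> = (Phi w (z^4) * Phi w z) $ w"
    using equpto_mult[OF e1, of "Phi w z"] by (simp add: equpto_def)
  also have "Phi w (z^4) * Phi w z = (\<Prod>k\<in>{1..w}. Geo k z * Geo k (z^4))"
    by (simp add: Phi_prod prod.distrib mult.commute)
  also have "(\<Prod>k\<in>{1..w}. Geo k z * Geo k (z^4)) $ w = 0"
    by (rule H_vanish[OF assms(1,2) le_refl assms(5)])
  finally show ?thesis .
qed

lemma e_mod5:
  fixes D :: int
  shows "(2 * D * D - D) mod 5 \<in> {0, 1, 3}"
proof -
  define q where "q = D div 5"
  define r where "r = D mod 5"
  have D: "D = 5 * q + r" by (simp add: q_def r_def)
  have r: "0 \<le> r" "r < 5" by (simp_all add: r_def)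
  have h: "2 * D * D - D = 5 * (10 * q * q + 4 * q * r - q) + (2 * r * r - r)"
    unfolding D by (simp add: algebra_simps)
  have m: "(2 * D * D - D) mod 5 = (2 * r * r - r) mod 5" unfolding h by (rule mod_mult_self4)
  from r have "r = 0 \<or> r = 1 \<or> r = 2 \<or> r = 3 \<or> r = 4" by auto
  then show ?thesis unfolding m by auto
qed

lemma absD: "\<bar>D::int\<bar> \<le> 2 * D * D - D"
proof (cases "D \<ge> 1")
  case True
  then have "D \<le> D * D" by (simp add: mult_le_cancel_left1)
  then show ?thesis using True by simp
next
  case False
  have "0 \<le> D * D" by simp
  then show ?thesis using False by (cases "D = 0") auto
qed

lemma mod5_lin: "(NN::int) mod 5 = 4 \<Longrightarrow> E mod 5 = 0 \<or> E mod 5 = 1 \<or> E mod 5 = 3 \<Longrightarrow> 2 * W = NN - E \<Longrightarrow> W mod 5 = 2 \<or> W mod 5 = 3 \<or> W mod 5 = 4"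
  by presburger

lemma lin1: "2 * W + 2 * a + 2 * b + e = NN + t \<Longrightarrow> 4 * W = 2 * NN + 2 * t - 2 * (2 * a) - 2 * (2 * b) - 2 * (e::int)"
  by linarith

lemma w_props:
  assumes N5: "N mod 5 = 4" and K: "K = 2 * N + 1" and cL: "c \<le> 2 * K"
    and eq: "2 * w + 2 * tri c + 2 * tri (2 * K - c) + (2 * K - c) = N + tri (2 * K)"
  shows "w \<le> c \<and> w \<le> 2 * K - c \<and> w mod 5 \<in> {2,3,4}"
proof -
  define W C KK NN where "W = int w" "C = int c" "KK = int K" "NN = int N"
  have Lc: "int (2 * K - c) = 2 * KK - C" using cL by (simp add: W_C_KK_NN_def)
  have t1: "2 * int (tri c) = C * (C - 1)" by (simp add: two_tri_int W_C_KK_NN_def)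
  have t2: "2 * int (tri (2 * K - c)) = (2 * KK - C) * (2 * KK - C - 1)" using two_tri_int[of "2*K - c"] Lc by simp
  have t3: "2 * int (tri (2 * K)) = (2 * KK) * (2 * KK - 1)" using two_tri_int[of "2*K"] by (simp add: W_C_KK_NN_def)
  have eqi: "2 * W + 2 * int (tri c) + 2 * int (tri (2 * K - c)) + (2 * KK - C) = NN + int (tri (2 * K))"
    using arg_cong[OF eq, of int] Lc by (simp add: W_C_KK_NN_def)
  define D where "D = C - KK"
  define X where "X = NN - (2 * D * D - D)"
  have "4 * W = 2 * NN + 2 * int (tri (2 * K)) - 2 * (2 * int (tri c)) - 2 * (2 * int (tri (2 * K - c))) - 2 * (2 * KK - C)"
    by (rule lin1[OF eqi])
  also have "\<dots> = 2 * NN + ((2 * KK) * (2 * KK - 1)) - 2 * (C * (C - 1)) - 2 * ((2 * KK - C) * (2 * KK - C - 1)) - 2 * (2 * KK - C)"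
    by (simp only: t1 t2 t3)
  also have "\<dots> = 2 * X" by (simp add: X_def D_def algebra_simps)
  finally have W2': "4 * W = 2 * X" .
  then have W2x: "2 * W = X" by linarith
  have W2: "2 * W = NN - (2 * D * D - D)" using W2x by (simp add: X_def)
  have W0: "0 \<le> W" by (simp add: W_C_KK_NN_def)
  have aD: "\<bar>D\<bar> \<le> NN" using absD[of D] W2 W0 by linarith
  have eD: "0 \<le> 2 * D * D - D" using absD[of D] by linarith
  have WN: "W \<le> NN" using W2 eD W0 by linarith
  have KN: "KK = 2 * NN + 1" using K by (simp add: W_C_KK_NN_def)
  have "W \<le> C" using aD WN KN D_def by linarith
  moreover have "W \<le> 2 * KK - C" using aD WN KN D_def by linarith
  moreover have "W mod 5 \<in> {2, 3, 4}"
  proof -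
    have "NN mod 5 = 4" unfolding W_C_KK_NN_def using N5 by presburger
    moreover have "(2 * D * D - D) mod 5 \<in> {0, 1, 3}" by (rule e_mod5)
    ultimately show ?thesis using W2 mod5_lin[of NN "2 * D * D - D" W] by auto
  qed
  ultimately have h1: "int w \<le> int c" and h2: "int w \<le> int (2 * K - c)" and h3: "int w mod 5 = 2 \<or> int w mod 5 = 3 \<or> int w mod 5 = 4"
    using Lc by (simp_all add: W_C_KK_NN_def)
  have "w mod 5 = 2 \<or> w mod 5 = 3 \<or> w mod 5 = 4" using h3 by presburger
  then show ?thesis using h1 h2 by simp
qed


lemma pair_vanish:
  fixes z :: complex
  assumes N5: "N mod 5 = 4" and K: "K = 2 * N + 1" and cL: "c \<le> 2 * K"
    and z: "z ^ 5 = 1" "z \<noteq> 1"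
  shows "(\<Sum>p\<in>PairSet (2 * K) N c. z ^ gbm (fst p) * (z^4) ^ gbm (snd p)) = 0"
proof (cases "\<exists>w. 2 * w + 2 * tri c + 2 * tri (2 * K - c) + (2 * K - c) = N + tri (2 * K)")
  case True
  then obtain w where eq: "2 * w + 2 * tri c + 2 * tri (2 * K - c) + (2 * K - c) = N + tri (2 * K)" by blast
  have wp: "w \<le> c \<and> w \<le> 2 * K - c \<and> w mod 5 \<in> {2,3,4}" by (rule w_props[OF N5 K cL eq])
  have "(\<Sum>p\<in>PairSet (2 * K) N c. z ^ gbm (fst p) * (z^4) ^ gbm (snd p)) = (Phi c z * Phi (2 * K - c) (z^4)) $ w"
    by (rule pair_coeff[OF cL eq])
  also have "\<dots> = 0" using bip_vanish[OF z] wp by blast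
  finally show ?thesis .
next
  case False
  have "PairSet (2 * K) N c = {}"
  proof (rule ccontr)
    assume "PairSet (2 * K) N c \<noteq> {}"
    then obtain p where p: "p \<in> PairSet (2 * K) N c" by blast
    then have f0: "finite (fst p)" and f1: "finite (snd p)" and c0: "card (fst p) = c"
      and c1: "card (fst p) + card (snd p) = 2 * K"
      and s: "2 * \<Sum>(fst p) + 2 * \<Sum>(snd p) + card (snd p) = N + tri (2 * K)" by (auto simp: PairSet_def)
    have c1': "card (snd p) = 2 * K - c" using c0 c1 by simp
    have g0: "tri c \<le> \<Sum>(fst p)" using sum_ge_tri[OF f0] c0 by simp
    have g1: "tri (2 * K - c) \<le> \<Sum>(snd p)" using sum_ge_tri[OF f1] c1' by simp
    have "2 * ((\<Sum>(fst p) - tri c) + (\<Sum>(snd p) - tri (2 * K - c))) + 2 * tri c + 2 * tri (2 * K - c) + (2 * K - c) = N + tri (2 * K)"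
      using s g0 g1 c1' by simp
    then show False using False by blast
  qed
  then show ?thesis by simp
qed

lemma card_evod_le: "finite B \<Longrightarrow> card (evod 0 B) \<le> card B"
proof -
  assume f: "finite B"
  have inj: "inj_on (\<lambda>b. 2 * b) (evod 0 B)" by (auto simp: inj_on_def)
  have "(\<lambda>b. 2 * b) ` evod 0 B \<subseteq> B" by (auto simp: evod_def)
  then have "card ((\<lambda>b. 2 * b) ` evod 0 B) \<le> card B" using f by (rule card_mono[rotated])
  then show ?thesis using card_image[OF inj] by simp
qed

lemma total_vanish:
  fixes z :: complex
  assumes N5: "N mod 5 = 4" and K: "K = 2 * N + 1" and z: "z ^ 5 = 1" "z \<noteq> 1"
  shows "(\<Sum>B\<in>sets_of (2 * K) N. if P (card (evod 0 B)) then z ^ gbm (evod 0 B) * (z^4) ^ gbm (evod 1 B) else 0) = 0"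
proof -
  define S where "S = sets_of (2 * K) N"
  define F where "F B = (if P (card (evod 0 B)) then z ^ gbm (evod 0 B) * (z^4) ^ gbm (evod 1 B) else 0)" for B
  have img: "(\<lambda>B. card (evod 0 B)) ` S \<subseteq> {0..2 * K}"
  proof
    fix c assume "c \<in> (\<lambda>B. card (evod 0 B)) ` S"
    then obtain B where B: "B \<in> S" "c = card (evod 0 B)" by auto
    then have "finite B" "card B = 2 * K" by (auto simp: S_def sets_of_def)
    then show "c \<in> {0..2 * K}" using card_evod_le[of B] B(2) by simp
  qed
  have "(\<Sum>B\<in>S. F B) = (\<Sum>c\<in>{0..2 * K}. \<Sum>B\<in>{B \<in> S. card (evod 0 B) = c}. F B)"
    by (rule sum.group[symmetric]) (use img in \<open>auto simp: S_def\<close>)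
  also have "\<dots> = 0"
  proof -
  have inner: "(\<Sum>B\<in>{B \<in> S. card (evod 0 B) = c}. F B) = 0" if c: "c \<in> {0..2 * K}" for c
  proof -
    have X: "(\<Sum>B\<in>{B \<in> S. card (evod 0 B) = c}. z ^ gbm (evod 0 B) * (z^4) ^ gbm (evod 1 B))
        = (\<Sum>p\<in>PairSet (2 * K) N c. z ^ gbm (fst p) * (z^4) ^ gbm (snd p))"
      unfolding S_def
      using sum.reindex_bij_betw[OF bij_split, of "\<lambda>p. z ^ gbm (fst p) * (z^4) ^ gbm (snd p)" "2 * K" N c]
      by simp
    have X0: "(\<Sum>B\<in>{B \<in> S. card (evod 0 B) = c}. z ^ gbm (evod 0 B) * (z^4) ^ gbm (evod 1 B)) = 0"
      unfolding X using pair_vanish[OF N5 K _ z] c by simp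
    have "(\<Sum>B\<in>{B \<in> S. card (evod 0 B) = c}. F B)
        = (if P c then (\<Sum>B\<in>{B \<in> S. card (evod 0 B) = c}. z ^ gbm (evod 0 B) * (z^4) ^ gbm (evod 1 B)) else 0)"
      by (auto simp: F_def intro!: sum.cong)
    then show "(\<Sum>B\<in>{B \<in> S. card (evod 0 B) = c}. F B) = 0" using X0 by simp
  qed
  show ?thesis using inner by (intro sum.neutral) blast
  qed
  finally show ?thesis by (simp add: S_def F_def)
qed

lemma powi_split:
  fixes z :: complex
  assumes "z ^ 5 = 1"
  shows "z powi (int a - int b) = z ^ a * (z^4) ^ b"
proof -
  have z0: "z \<noteq> 0" using assms by auto
  have "(z^4) ^ b * z ^ b = (z^4 * z) ^ b" by (simp add: power_mult_distrib)
  also have "z^4 * z = z^5" by (simp add: eval_nat_numeral)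
  finally have "(z^4) ^ b * z ^ b = 1" using assms by simp
  then have "(z^4) ^ b = inverse (z ^ b)" by (rule inverse_unique[symmetric, OF trans[OF mult.commute]])
  moreover have "z powi (int a - int b) = z ^ a / z ^ b" using z0 by (simp add: power_int_diff)
  ultimately show ?thesis by (simp add: divide_inverse)
qed


lemma finite_partitions: "finite (partitions N)"
  using bij_betw_finite[OF enc_bij[of N N]] by simp

lemma part_vanish:
  fixes z :: complex
  assumes N5: "N mod 5 = 4" and z: "z ^ 5 = 1" "z \<noteq> 1"
  shows "(\<Sum>xs\<in>{xs \<in> partitions N. srank xs mod 4 = i}. z powi (two_quotient_rank xs)) = 0"
proof -
  define K where "K = 2 * N + 1"
  define P where "P c = ((int N - (int c - int K)) mod 4 = i)" for c :: nat
  define H where "H B = (if P (card (evod 0 B)) then z ^ gbm (evod 0 B) * (z^4) ^ gbm (evod 1 B) else 0)" for B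
  have NL: "N \<le> 2 * K" by (simp add: K_def)
  have "(\<Sum>xs\<in>{xs \<in> partitions N. srank xs mod 4 = i}. z powi (two_quotient_rank xs))
      = (\<Sum>xs\<in>partitions N. if srank xs mod 4 = i then z powi (two_quotient_rank xs) else 0)"
    by (rule sum.inter_filter[OF finite_partitions])
  also have "\<dots> = (\<Sum>xs\<in>partitions N. H (enc (2 * K) xs))"
  proof (intro sum.cong refl)
    fix xs assume xs: "xs \<in> partitions N"
    have lL: "length xs \<le> 2 * K" using part_length_le[OF xs] NL by simp
    have "srank xs mod 4 = i \<longleftrightarrow> P (card (evod 0 (enc (2 * K) xs)))"
      unfolding P_def srank_mod[OF xs lL] ..
    moreover have "z powi (two_quotient_rank xs) = z ^ gbm (evod 0 (enc (2*K) xs)) * (z^4) ^ gbm (evod 1 (enc (2*K) xs))"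
      unfolding tqr_enc[OF lL] by (rule powi_split[OF z(1)])
    ultimately show "(if srank xs mod 4 = i then z powi (two_quotient_rank xs) else 0) = H (enc (2 * K) xs)"
      by (simp add: H_def)
  qed
  also have "\<dots> = (\<Sum>B\<in>sets_of (2 * K) N. H B)"
    by (rule sum.reindex_bij_betw[OF enc_bij[OF NL]])
  also have "\<dots> = 0" unfolding H_def by (rule total_vanish[OF N5 K_def z])
  finally show ?thesis .
qed

definition omega :: complex where "omega = cis (2 * pi / 5)"

lemma omega5: "omega ^ 5 = 1"
  unfolding omega_def DeMoivre by simp

lemma omega_ne1: "d \<in> {1,2,3,4} \<Longrightarrow> omega ^ d \<noteq> 1"
proof -
  assume d: "d \<in> {1,2,3,4}"
  have "Im (omega ^ d) = sin (real d * (2 * pi / 5))" unfolding omega_def DeMoivre by simp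
  moreover have "sin (real d * (2 * pi / 5)) \<noteq> 0"
  proof -
    consider "d = 1" | "d = 2" | "d = 3" | "d = 4" using d by auto
    then show ?thesis
    proof cases
      case 1 then show ?thesis using sin_gt_zero[of "2 * pi / 5"] pi_gt_zero by auto
    next
      case 2 then show ?thesis using sin_gt_zero[of "2 * (2 * pi / 5)"] pi_gt_zero by auto
    next
      case 3 then show ?thesis using sin_lt_zero[of "3 * (2 * pi / 5)"] pi_gt_zero by auto
    next
      case 4 then show ?thesis using sin_lt_zero[of "4 * (2 * pi / 5)"] pi_gt_zero by auto
    qed
  qed
  ultimately show ?thesis by auto
qed

lemma omega_pow_mod: "omega ^ e = omega ^ (e mod 5)"
proof -
  have "omega ^ e = omega ^ (5 * (e div 5) + e mod 5)" by simp
  also have "\<dots> = (omega ^ 5) ^ (e div 5) * omega ^ (e mod 5)" by (simp only: power_add power_mult)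
  finally show ?thesis by (simp add: omega5)
qed

lemma omega_ne1': "\<not> 5 dvd e \<Longrightarrow> omega ^ e \<noteq> 1"
proof -
  assume "\<not> 5 dvd e"
  then have "e mod 5 = 1 \<or> e mod 5 = 2 \<or> e mod 5 = 3 \<or> e mod 5 = 4" by presburger
  then have "e mod 5 \<in> {1,2,3,4}" by auto
  then have "omega ^ (e mod 5) \<noteq> 1" by (rule omega_ne1)
  then show ?thesis using omega_pow_mod[of e] by simp
qed

lemma geo5: "(\<Sum>k<5. (omega ^ e) ^ k) = (if 5 dvd e then 5 else 0)"
proof (cases "5 dvd e")
  case True
  then have "omega ^ e = 1" using omega_pow_mod[of e] by simp
  then show ?thesis using True by simp
next
  case False
  have "(omega ^ e) ^ 5 = (omega ^ 5) ^ e" by (simp only: power_mult[symmetric] mult.commute)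
  then have "(omega ^ e) ^ 5 = 1" by (simp add: omega5)
  then show ?thesis using False omega_ne1'[OF False] by (simp add: sum_gp_strict)
qed


lemma powi_mod5:
  fixes z :: complex
  assumes "z ^ 5 = 1"
  shows "z powi x = z ^ nat (x mod 5)"
proof -
  have z0: "z \<noteq> 0" using assms by auto
  have "z powi x = z powi (5 * (x div 5) + x mod 5)" by simp
  also have "\<dots> = z powi (5 * (x div 5)) * z powi (x mod 5)" by (rule power_int_add) (simp add: z0)
  also have "z powi (5 * (x div 5)) = 1" by (rule powi_5dvd[OF assms]) simp
  also have "z powi (x mod 5) = z ^ nat (x mod 5)"
    by (metis power_int_of_nat pos_mod_sign zero_less_numeral nat_0_le)
  finally show ?thesis by simp
qed

theorem theorem2:
  fixes n :: nat and i m :: int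
  assumes "i \<in> {0, 2}" and "m \<in> {0..4}"
  shows "real (card {xs \<in> partitions (5 * n + 4).
                       srank xs mod 4 = i \<and> two_quotient_rank xs mod 5 = m})
         = real (p_srank i (5 * n + 4)) / 5"
proof -
  define N where "N = 5 * n + 4"
  have N5: "N mod 5 = 4" by (simp add: N_def)
  define S where "S = {xs \<in> partitions N. srank xs mod 4 = i}"
  define r where "r xs = nat (two_quotient_rank xs mod 5)" for xs
  define mm where "mm = nat m"
  have mm: "m = int mm" "mm \<le> 4" using assms(2) by (auto simp: mm_def)
  have fS: "finite S" by (simp add: S_def finite_partitions)
  have r4: "r xs \<le> 4" for xs
  proof -
    have "two_quotient_rank xs mod 5 < 5" by simp
    then show ?thesis by (simp add: r_def)
  qed
  have setE: "{xs \<in> partitions N. srank xs mod 4 = i \<and> two_quotient_rank xs mod 5 = m} = {xs \<in> S. r xs = mm}"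
  proof -
    have "two_quotient_rank xs mod 5 = m \<longleftrightarrow> r xs = mm" for xs
    proof -
      have "0 \<le> two_quotient_rank xs mod 5" by simp
      then show ?thesis using mm by (auto simp: r_def)
    qed
    then show ?thesis by (auto simp: S_def)
  qed
  have van: "(\<Sum>xs\<in>S. (omega ^ k) ^ r xs) = 0" if k: "k \<in> {1,2,3,4}" for k
  proof -
    have "(omega ^ k) ^ 5 = (omega ^ 5) ^ k" by (simp only: power_mult[symmetric] mult.commute)
    then have z5: "(omega ^ k) ^ 5 = 1" by (simp add: omega5)
    have z1: "omega ^ k \<noteq> 1" by (rule omega_ne1[OF k])
    have "(\<Sum>xs\<in>S. (omega ^ k) ^ r xs) = (\<Sum>xs\<in>S. (omega ^ k) powi two_quotient_rank xs)"
      by (intro sum.cong refl) (simp add: r_def powi_mod5[OF z5])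
    also have "\<dots> = 0" unfolding S_def by (rule part_vanish[OF N5 z5 z1])
    finally show ?thesis .
  qed
  have A: "(\<Sum>xs\<in>S. \<Sum>k<5. (omega ^ (r xs + (5 - mm))) ^ k) = of_nat (5 * card {xs \<in> S. r xs = mm})"
  proof -
    have "(\<Sum>xs\<in>S. \<Sum>k<5. (omega ^ (r xs + (5 - mm))) ^ k) = (\<Sum>xs\<in>S. if r xs = mm then 5 else 0)"
    proof (intro sum.cong refl)
      fix xs
      have "5 dvd (r xs + (5 - mm)) \<longleftrightarrow> r xs = mm" using r4[of xs] mm(2) by presburger
      then show "(\<Sum>k<5. (omega ^ (r xs + (5 - mm))) ^ k) = (if r xs = mm then 5 else 0)"
        by (simp only: geo5)
    qed
    also have "\<dots> = (\<Sum>xs\<in>{xs \<in> S. r xs = mm}. 5)" by (rule sum.inter_filter[OF fS, symmetric])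
    also have "\<dots> = of_nat (5 * card {xs \<in> S. r xs = mm})" by simp
    finally show ?thesis .
  qed
  have B: "(\<Sum>xs\<in>S. \<Sum>k<5. (omega ^ (r xs + (5 - mm))) ^ k) = of_nat (card S)"
  proof -
    have "(\<Sum>xs\<in>S. \<Sum>k<5. (omega ^ (r xs + (5 - mm))) ^ k)
        = (\<Sum>k<5. (omega ^ (5 - mm)) ^ k * (\<Sum>xs\<in>S. (omega ^ k) ^ r xs))"
      by (subst sum.swap) (simp add: sum_distrib_left sum_distrib_right power_add power_mult_distrib
          flip: power_mult mult.commute)
    also have "\<dots> = (\<Sum>k\<in>insert 0 {1..4}. (omega ^ (5 - mm)) ^ k * (\<Sum>xs\<in>S. (omega ^ k) ^ r xs))"
    proof -
      have "{..<5::nat} = insert 0 {1..4}" by auto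
      then show ?thesis by simp
    qed
    also have "\<dots> = (\<Sum>xs\<in>S. 1) + (\<Sum>k\<in>{1..4}. (omega ^ (5 - mm)) ^ k * (\<Sum>xs\<in>S. (omega ^ k) ^ r xs))"
      by (subst sum.insert) auto
    also have "(\<Sum>k\<in>{1..4}. (omega ^ (5 - mm)) ^ k * (\<Sum>xs\<in>S. (omega ^ k) ^ r xs)) = 0"
    proof (intro sum.neutral ballI)
      fix k :: nat assume "k \<in> {1..4}"
      then have "k \<in> {1,2,3,4}" by auto
      then show "(omega ^ (5 - mm)) ^ k * (\<Sum>xs\<in>S. (omega ^ k) ^ r xs) = 0" using van by simp
    qed
    finally show ?thesis by simp
  qed
  have "of_nat (5 * card {xs \<in> S. r xs = mm}) = (of_nat (card S) :: complex)" using A B by simp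
  then have "5 * card {xs \<in> S. r xs = mm} = card S" by (simp only: of_nat_eq_iff)
  moreover have "p_srank i N = card S" by (simp add: p_srank_def S_def)
  ultimately show ?thesis using setE by (simp add: N_def[symmetric])
qed


end
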